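(* Let $\mathcal{H}$ be a complex separable Hilbert space and $A\in\mathcal{B}(\mathcal{H})$ with a Riesz basis $\{e_j\}_{j\in J}$ of eigenvectors, $Ae_j=-\lambda_je_j$, where $\lambda_j\in\mathbb{C}_+$ for all $j$. Let $I$ be a countable index set and $g^i\in\mathcal{H}$ for $i\in I$, with expansions $g^i=\sum_j g^i_je_j$. Define $a^i:=\sum_j\frac{\sqrt2}{1+\lambda_j}g^i_je_j$ (equivalently $a^i=\sqrt2(I_{\mathcal{H}}-A)^{-1}g^i$) and $B:=(I_{\mathcal{H}}+A)(I_{\mathcal{H}}-A)^{-1}$, so that $Be_j=\mathfrak{h}(\lambda_j)e_j$. Then $\{e^{tA}g^i\}_{i\in I,\,t\in[0,\infty)}$ is a semi-continuous frame for $\mathcal{H}$ if and only if $\{B^na^i\}_{i\in I,\,n\in\mathbb{N}\cup\{0\}}$ is a frame for $\mathcal{H}$.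
   Context: A Riesz basis is a complete family $\{e_j\}$ for which there are $c,C>0$ with $c\sum|x_j|^2\le\|\sum x_je_j\|^2\le C\sum|x_j|^2$ for all finite sequences $(x_j)$. $\mathbb{C}_+=\{z:\mathrm{Re}\,z>0\}$, $\mathbb{D}=\{z:|z|<1\}$, $\mathfrak{h}(z)=\frac{1-z}{1+z}$ (a bijection $\mathbb{C}_+\leftrightarrow\mathbb{D}$); $I_{\mathcal{H}}$ is the identity. $e^{tA}:=\sum_{n\ge0}\frac{t^n}{n!}A^n$. A countable family $\{f_k\}\subset\mathcal{H}$ is a frame if there are $c,C>0$ with $c\|f\|^2\le\sum_k|\langle f,f_k\rangle|^2\le C\|f\|^2$ for all $f$. For a countable $\mathcal{G}\subset\mathcal{H}$ and an interval $\mathcal{T}\subset[0,\infty)$, $\{e^{tA}g\}_{g\in\mathcal{G},t\in\mathcal{T}}$ is a semi-continuous frame for $\mathcal{H}$ if there are constants $c,C>0$ such that $c\|f\|^2\le\sum_{g\in\mathcal{G}}\int_{\mathcal{T}}|\langle f,e^{tA}g\rangle|^2\,dt\le C\|f\|^2$ for all $f\in\mathcal{H}$. *)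

theory Defs
  imports "HOL-Analysis.Analysis"
begin

text \<open>A complex inner product space is encoded as a real inner product space
(real part of the complex inner product) equipped with a complex scalar
multiplication extending the real one, for which multiplication by i is an
isometry.\<close>

class complex_inner = real_inner +
  fixes scaleC :: "complex \<Rightarrow> 'a \<Rightarrow> 'a" (infixr \<open>*\<^sub>C\<close> 75)
  assumes scaleC_add_right: "a *\<^sub>C (x + y) = a *\<^sub>C x + a *\<^sub>C y"
    and scaleC_add_left: "(a + b) *\<^sub>C x = a *\<^sub>C x + b *\<^sub>C x"
    and scaleC_scaleC: "a *\<^sub>C (b *\<^sub>C x) = (a * b) *\<^sub>C x"
    and scaleC_of_real: "complex_of_real r *\<^sub>C x = r *\<^sub>R x"
    and inner_scaleC_ii: "inner (\<i> *\<^sub>C x) (\<i> *\<^sub>C y) = inner x y"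

class chilbert_space = complex_inner + complete_space

instantiation complex :: complex_inner
begin
definition scaleC_complex :: "complex \<Rightarrow> complex \<Rightarrow> complex" where
  "scaleC_complex a z = a * z"
instance
  by standard (auto simp: scaleC_complex_def algebra_simps inner_complex_def scaleR_conv_of_real)
end

instance complex :: chilbert_space ..

text \<open>The complex inner product, linear in the first argument.\<close>
definition cinner :: "'a::complex_inner \<Rightarrow> 'a \<Rightarrow> complex" where
  "cinner x y = Complex (inner x y) (inner x (\<i> *\<^sub>C y))"

definition bounded_clinear :: "('a::complex_inner \<Rightarrow> 'b::complex_inner) \<Rightarrow> bool" where
  "bounded_clinear T \<longleftrightarrow> bounded_linear T \<and> (\<forall>c x. T (c *\<^sub>C x) = c *\<^sub>C T x)"

definition cspan :: "'a::complex_inner set \<Rightarrow> 'a set" where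
  "cspan S = {\<Sum>x\<in>F. u x *\<^sub>C x | F u. finite F \<and> F \<subseteq> S}"

definition riesz_basis :: "('j \<Rightarrow> 'a::complex_inner) \<Rightarrow> bool" where
  "riesz_basis e \<longleftrightarrow> closure (cspan (range e)) = UNIV \<and>
     (\<exists>c C. c > 0 \<and> C > 0 \<and>
        (\<forall>(x::'j \<Rightarrow> complex) F. finite F \<longrightarrow>
           c * (\<Sum>j\<in>F. (cmod (x j))\<^sup>2) \<le> (norm (\<Sum>j\<in>F. x j *\<^sub>C e j))\<^sup>2 \<and>
           (norm (\<Sum>j\<in>F. x j *\<^sub>C e j))\<^sup>2 \<le> C * (\<Sum>j\<in>F. (cmod (x j))\<^sup>2)))"

definition exp_op :: "real \<Rightarrow> ('a::complex_inner \<Rightarrow> 'a) \<Rightarrow> 'a \<Rightarrow> 'a" where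
  "exp_op t A x = (\<Sum>n. (t ^ n / fact n) *\<^sub>R (A ^^ n) x)"

definition is_frame :: "('k \<Rightarrow> 'a::complex_inner) \<Rightarrow> 'k set \<Rightarrow> bool" where
  "is_frame f K \<longleftrightarrow> countable K \<and> (\<exists>c C. c > 0 \<and> C > 0 \<and> (\<forall>x.
     ennreal (c * (norm x)\<^sup>2) \<le> (\<integral>\<^sup>+ k. ennreal ((cmod (cinner x (f k)))\<^sup>2) \<partial>count_space K) \<and>
     (\<integral>\<^sup>+ k. ennreal ((cmod (cinner x (f k)))\<^sup>2) \<partial>count_space K) \<le> ennreal (C * (norm x)\<^sup>2)))"

definition semi_continuous_frame ::
    "('a::complex_inner \<Rightarrow> 'a) \<Rightarrow> ('i \<Rightarrow> 'a) \<Rightarrow> 'i set \<Rightarrow> real set \<Rightarrow> bool" where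
  "semi_continuous_frame A g I T \<longleftrightarrow> (\<exists>c C. c > 0 \<and> C > 0 \<and> (\<forall>f.
     ennreal (c * (norm f)\<^sup>2) \<le>
       (\<integral>\<^sup>+ i. (\<integral>\<^sup>+ t\<in>T. ennreal ((cmod (cinner f (exp_op t A (g i))))\<^sup>2) \<partial>lborel) \<partial>count_space I) \<and>
     (\<integral>\<^sup>+ i. (\<integral>\<^sup>+ t\<in>T. ennreal ((cmod (cinner f (exp_op t A (g i))))\<^sup>2) \<partial>lborel) \<partial>count_space I)
       \<le> ennreal (C * (norm f)\<^sup>2)))"

end

theory Submission
  imports Defs
begin


lemma scaleC_one[simp]: "(1::complex) *\<^sub>C x = x"
  using scaleC_of_real[of 1 x] by simp

lemma scaleC_zero_left[simp]: "(0::complex) *\<^sub>C x = 0"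
  using scaleC_of_real[of 0 x] by simp

lemma scaleC_zero_right[simp]: "a *\<^sub>C (0::'a::complex_inner) = 0"
  using scaleC_add_right[of a "0::'a" 0] by simp

lemma scaleC_real_comm: "a *\<^sub>C (r *\<^sub>R x) = r *\<^sub>R (a *\<^sub>C x)"
  by (metis mult.commute scaleC_of_real scaleC_scaleC)

lemma ii_ii: "\<i> *\<^sub>C (\<i> *\<^sub>C x) = - (x::'a::complex_inner)"
proof -
  have "\<i> *\<^sub>C (\<i> *\<^sub>C x) = complex_of_real (-1) *\<^sub>C x" by (simp add: scaleC_scaleC)
  also have "\<dots> = - x" by (simp only: scaleC_of_real) simp
  finally show ?thesis .
qed

lemma inner_ii_self: "inner x (\<i> *\<^sub>C (x::'a::complex_inner)) = 0"
proof -
  have "inner x (\<i> *\<^sub>C x) = inner (\<i> *\<^sub>C x) (\<i> *\<^sub>C (\<i> *\<^sub>C x))"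
    by (simp add: inner_scaleC_ii)
  also have "\<dots> = - inner x (\<i> *\<^sub>C x)" by (simp add: ii_ii inner_commute)
  finally show ?thesis by simp
qed

lemma scaleC_decomp: "a *\<^sub>C x = Re a *\<^sub>R x + Im a *\<^sub>R (\<i> *\<^sub>C (x::'a::complex_inner))"
proof -
  have "a = complex_of_real (Re a) + \<i> * complex_of_real (Im a)"
    by (simp add: complex_eq_iff)
  then have "a *\<^sub>C x = complex_of_real (Re a) *\<^sub>C x + \<i> *\<^sub>C (complex_of_real (Im a) *\<^sub>C x)"
    by (metis scaleC_add_left scaleC_scaleC)
  then show ?thesis by (simp add: scaleC_of_real scaleC_real_comm)
qed

lemma norm_scaleC[simp]: "norm (a *\<^sub>C x) = cmod a * norm (x::'a::complex_inner)"
proof -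
  define p where "p = Re a"
  define q where "q = Im a"
  define y where "y = \<i> *\<^sub>C x"
  have yy: "inner y y = inner x x" by (simp add: y_def inner_scaleC_ii)
  have xy: "inner x y = 0" by (simp add: y_def inner_ii_self)
  have yx: "inner y x = 0" using xy by (simp add: inner_commute)
  have "(norm (a *\<^sub>C x))\<^sup>2 = inner (p *\<^sub>R x + q *\<^sub>R y) (p *\<^sub>R x + q *\<^sub>R y)"
    unfolding scaleC_decomp[of a x] p_def q_def y_def power2_norm_eq_inner ..
  also have "\<dots> = p * p * inner x x + q * q * inner y y + p * q * inner x y + q * p * inner y x"
    by (simp add: inner_add_left inner_add_right algebra_simps)
  also have "\<dots> = (p\<^sup>2 + q\<^sup>2) * inner x x"
    by (simp add: yy xy yx power2_eq_square algebra_simps)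
  also have "\<dots> = (cmod a * norm x)\<^sup>2"
    by (simp add: cmod_def p_def q_def power_mult_distrib power2_norm_eq_inner)
  finally show ?thesis
    by (metis norm_ge_zero power2_eq_imp_eq mult_nonneg_nonneg)
qed

lemma bounded_linear_scaleC_right: "bounded_linear (\<lambda>x::'a::complex_inner. a *\<^sub>C x)"
  by (rule bounded_linear_intro[where K="cmod a"])
     (simp_all add: scaleC_add_right scaleC_real_comm)

lemma bounded_linear_scaleC_left: "bounded_linear (\<lambda>a. a *\<^sub>C (x::'a::complex_inner))"
proof (rule bounded_linear_intro[where K="norm x"])
  show "\<And>b c. (b + c) *\<^sub>C x = b *\<^sub>C x + c *\<^sub>C x" by (rule scaleC_add_left)
  show "\<And>r b. (r *\<^sub>R b) *\<^sub>C x = r *\<^sub>R (b *\<^sub>C x)"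
    by (simp add: scaleR_conv_of_real scaleC_scaleC[symmetric] scaleC_of_real)
  show "\<And>b. norm (b *\<^sub>C x) \<le> norm b * norm x" by simp
qed

lemma scaleC_minus_right: "a *\<^sub>C (- x) = - (a *\<^sub>C (x::'a::complex_inner))"
  using linear_simps(4)[OF bounded_linear_scaleC_right] by blast

lemma scaleC_diff_right: "a *\<^sub>C (x - y) = a *\<^sub>C x - a *\<^sub>C (y::'a::complex_inner)"
  using linear_simps(2)[OF bounded_linear_scaleC_right] by blast

lemma scaleC_sum_right: "a *\<^sub>C (\<Sum>i\<in>S. f i) = (\<Sum>i\<in>S. a *\<^sub>C (f i::'a::complex_inner))"
  using real_vector.linear_sum[OF bounded_linear.linear[OF bounded_linear_scaleC_right]] by blast

lemma scaleC_minus_left: "(- a) *\<^sub>C x = - (a *\<^sub>C (x::'a::complex_inner))"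
  using linear_simps(4)[OF bounded_linear_scaleC_left] by blast

lemma scaleC_diff_left: "(a - b) *\<^sub>C x = a *\<^sub>C x - b *\<^sub>C (x::'a::complex_inner)"
  using linear_simps(2)[OF bounded_linear_scaleC_left] by blast

lemma scaleC_sum_left: "(\<Sum>i\<in>S. f i) *\<^sub>C x = (\<Sum>i\<in>S. f i *\<^sub>C (x::'a::complex_inner))"
  using real_vector.linear_sum[OF bounded_linear.linear[OF bounded_linear_scaleC_left]] by blast

lemma cinner_add_right: "cinner x (y + z) = cinner x y + cinner x z"
  by (simp add: cinner_def scaleC_add_right inner_add_right complex_eq_iff)

lemma cinner_scaleR_right: "cinner x (r *\<^sub>R y) = r *\<^sub>R cinner x y"
  by (simp add: cinner_def scaleC_real_comm complex_eq_iff)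

lemma cinner_ii_right: "cinner x (\<i> *\<^sub>C y) = - \<i> * cinner x y"
  by (simp add: cinner_def ii_ii complex_eq_iff)

lemma cinner_scaleC_right: "cinner x (a *\<^sub>C y) = cnj a * cinner x y"
  unfolding scaleC_decomp[of a y]
  by (simp add: cinner_add_right cinner_scaleR_right cinner_ii_right scaleR_conv_of_real
      complex_eq_iff algebra_simps)

lemma Re_cinner: "Re (cinner x y) = inner x y"
  by (simp add: cinner_def)

lemma cmod_cinner_le: "cmod (cinner x y) \<le> norm x * norm y"
proof (cases "cinner x y = 0")
  case True then show ?thesis by simp
next
  case False
  define w where "w = cinner x y"
  define u where "u = w / complex_of_real (cmod w)"
  have w0: "cmod w \<noteq> 0" using False by (simp add: w_def)
  have u1: "cmod u = 1" using w0 by (simp add: u_def norm_divide)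
  have "cnj u * w = (w * cnj w) / complex_of_real (cmod w)"
    by (simp add: u_def)
  also have "\<dots> = complex_of_real ((cmod w)\<^sup>2) / complex_of_real (cmod w)"
    by (simp only: complex_norm_square)
  also have "\<dots> = complex_of_real (cmod w)"
    using w0 by (simp add: power2_eq_square)
  finally have "cnj u * w = complex_of_real (cmod w)" .
  then have "cmod w = Re (cinner x (u *\<^sub>C y))" by (simp add: cinner_scaleC_right w_def)
  also have "\<dots> = inner x (u *\<^sub>C y)" by (rule Re_cinner)
  also have "\<dots> \<le> norm x * norm (u *\<^sub>C y)" by (rule norm_cauchy_schwarz)
  finally show ?thesis using u1 by (simp add: w_def)
qed

lemma bounded_linear_cinner_right: "bounded_linear (cinner x)"
  by (rule bounded_linear_intro[where K="norm x"])
     (simp_all add: cinner_add_right cinner_scaleR_right, metis cmod_cinner_le mult.commute)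

lemma cinner_sum_right: "cinner x (\<Sum>i\<in>S. f i) = (\<Sum>i\<in>S. cinner x (f i))"
  using real_vector.linear_sum[OF bounded_linear.linear[OF bounded_linear_cinner_right]] by blast

lemma cinner_diff_right: "cinner x (y - z) = cinner x y - cinner x z"
  using linear_simps(2)[OF bounded_linear_cinner_right] by blast


lemma bounded_clinear_id: "bounded_clinear (\<lambda>x. x)"
  by (simp add: bounded_clinear_def bounded_linear_ident)

lemma bounded_clinear_compose:
  "bounded_clinear S \<Longrightarrow> bounded_clinear T \<Longrightarrow> bounded_clinear (\<lambda>x. S (T x))"
  unfolding bounded_clinear_def by (auto intro: bounded_linear_compose)

lemma bounded_clinear_add:
  "bounded_clinear S \<Longrightarrow> bounded_clinear T \<Longrightarrow> bounded_clinear (\<lambda>x. S x + T x)"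
  unfolding bounded_clinear_def by (auto intro: bounded_linear_add simp: scaleC_add_right)

lemma bounded_clinear_diff:
  "bounded_clinear S \<Longrightarrow> bounded_clinear T \<Longrightarrow> bounded_clinear (\<lambda>x. S x - T x)"
  unfolding bounded_clinear_def by (auto intro: bounded_linear_sub simp: scaleC_diff_right)

lemma bounded_clinear_scaleC:
  "bounded_clinear T \<Longrightarrow> bounded_clinear (\<lambda>x. a *\<^sub>C T x)"
  unfolding bounded_clinear_def
  by (auto intro: bounded_linear_compose[OF bounded_linear_scaleC_right] simp: scaleC_scaleC mult.commute)

lemma bounded_clinear_funpow:
  fixes T :: "'a::complex_inner \<Rightarrow> 'a"
  shows "bounded_clinear T \<Longrightarrow> bounded_clinear (T ^^ n)"
proof (induction n)
  case 0
  have "(T ^^ 0) = (\<lambda>x. x)" by (rule ext) simp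
  then show ?case using bounded_clinear_id by (simp add: id_def)
next
  case (Suc n)
  have "(T ^^ Suc n) = (\<lambda>x. T ((T ^^ n) x))" by (rule ext) simp
  then show ?case using bounded_clinear_compose[of T "T ^^ n"] Suc by simp
qed

lemma bounded_clinear_bl: "bounded_clinear T \<Longrightarrow> bounded_linear T"
  by (simp add: bounded_clinear_def)

lemma clinear_scaleC: "bounded_clinear T \<Longrightarrow> T (a *\<^sub>C x) = a *\<^sub>C T x"
  by (simp add: bounded_clinear_def)

lemma clinear_sum: "bounded_clinear T \<Longrightarrow> T (\<Sum>i\<in>S. f i) = (\<Sum>i\<in>S. T (f i))"
proof -
  assume "bounded_clinear T"
  then have "linear T" by (simp add: bounded_clinear_def bounded_linear.linear)
  then show ?thesis by (rule real_vector.linear_sum)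
qed

locale rb =
  fixes e :: "'j \<Rightarrow> 'h::chilbert_space" and c C :: real
  assumes dense: "closure (cspan (range e)) = UNIV"
    and cpos: "c > 0" and Cpos: "C > 0"
    and lower: "\<And>F x. finite F \<Longrightarrow> c * (\<Sum>j\<in>F. (cmod (x j))\<^sup>2) \<le> (norm (\<Sum>j\<in>F. x j *\<^sub>C e j))\<^sup>2"
    and upper: "\<And>F x. finite F \<Longrightarrow> (norm (\<Sum>j\<in>F. x j *\<^sub>C e j))\<^sup>2 \<le> C * (\<Sum>j\<in>F. (cmod (x j))\<^sup>2)"
begin

lemma e_inj: "inj e"
proof (rule injI, rule ccontr)
  fix j k assume ejk: "e j = e k" and ne: "j \<noteq> k"
  define x where "x = (\<lambda>i. if i = j then (1::complex) else if i = k then -1 else 0)"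
  have "(\<Sum>i\<in>{j,k}. x i *\<^sub>C e i) = 0"
    using ne ejk by (simp add: x_def scaleC_minus_left)
  moreover have "(\<Sum>i\<in>{j,k}. (cmod (x i))\<^sup>2) = 2"
    using ne by (simp add: x_def)
  ultimately show False using lower[of "{j,k}" x] cpos by simp
qed

definition fc :: "'h \<Rightarrow> bool" where
  "fc y \<longleftrightarrow> (\<exists>F x. finite F \<and> y = (\<Sum>j\<in>F. x j *\<^sub>C e j))"

lemma cspan_fc: "y \<in> cspan (range e) \<Longrightarrow> fc y"
proof -
  assume "y \<in> cspan (range e)"
  then obtain F u where F: "finite F" "F \<subseteq> range e" and y: "y = (\<Sum>v\<in>F. u v *\<^sub>C v)"
    by (auto simp: cspan_def)
  define G where "G = inv e ` F"
  have "e ` G = (\<lambda>x. x) ` F"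
    unfolding G_def image_image by (rule image_cong) (use F in \<open>auto simp: f_inv_into_f\<close>)
  then have eG: "e ` G = F" by simp
  have fG: "finite G" using F by (simp add: G_def)
  have yG: "y = (\<Sum>j\<in>G. u (e j) *\<^sub>C e j)"
  proof -
    have inj: "inj_on e G" by (rule inj_on_subset[OF e_inj]) simp
    have "y = (\<Sum>v\<in>e ` G. u v *\<^sub>C v)" using y eG by simp
    also have "\<dots> = (\<Sum>j\<in>G. u (e j) *\<^sub>C e j)"
      by (simp add: sum.reindex[OF inj] comp_def)
    finally show ?thesis .
  qed
  show "fc y" unfolding fc_def
    by (rule exI[of _ G], rule exI[of _ "\<lambda>j. u (e j)"]) (simp add: fG yG)
qed

lemma closed_all:
  assumes "closed S" and "\<And>F x. finite F \<Longrightarrow> (\<Sum>j\<in>F. x j *\<^sub>C e j) \<in> S"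
  shows "y \<in> S"
proof -
  have "cspan (range e) \<subseteq> S"
  proof
    fix y assume "y \<in> cspan (range e)"
    then obtain F x where "finite F" "y = (\<Sum>j\<in>F. x j *\<^sub>C e j)"
      using cspan_fc unfolding fc_def by blast
    then show "y \<in> S" using assms(2) by simp
  qed
  then have "closure (cspan (range e)) \<subseteq> S" using assms(1) by (rule closure_minimal)
  then show ?thesis using dense by auto
qed

lemma approx:
  obtains s where "\<And>n. fc (s n)" "s \<longlonglongrightarrow> y"
proof -
  have "y \<in> closure (cspan (range e))" using dense by simp
  then obtain s where "\<And>n. s n \<in> cspan (range e)" "s \<longlonglongrightarrow> y"
    by (auto simp: closure_sequential)
  then show ?thesis using that cspan_fc by blast
qed

definition diag :: "('h \<Rightarrow> 'h) \<Rightarrow> ('j \<Rightarrow> complex) \<Rightarrow> bool" where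
  "diag T m \<longleftrightarrow> bounded_clinear T \<and> (\<forall>j. T (e j) = m j *\<^sub>C e j)"

lemma diag_sum:
  assumes "diag T m"
  shows "T (\<Sum>j\<in>F. x j *\<^sub>C e j) = (\<Sum>j\<in>F. (m j * x j) *\<^sub>C e j)"
proof -
  have "T (\<Sum>j\<in>F. x j *\<^sub>C e j) = (\<Sum>j\<in>F. T (x j *\<^sub>C e j))"
    using assms by (simp add: diag_def clinear_sum)
  also have "\<dots> = (\<Sum>j\<in>F. (m j * x j) *\<^sub>C e j)"
    using assms by (simp add: diag_def clinear_scaleC scaleC_scaleC mult.commute)
  finally show ?thesis .
qed

lemma diag_cont: "diag T m \<Longrightarrow> continuous_on S T"
  by (simp add: diag_def bounded_clinear_def linear_continuous_on)

lemma diag_bound: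
  assumes "diag T m" and M: "\<And>j. cmod (m j) \<le> M"
  shows "norm (T y) \<le> sqrt (C / c) * M * norm y"
proof -
  have M0: "0 \<le> M" using M[of undefined] norm_ge_zero order_trans by blast
  have "y \<in> {y. norm (T y) \<le> sqrt (C / c) * M * norm y}"
  proof (rule closed_all)
    show "closed {y. norm (T y) \<le> sqrt (C / c) * M * norm y}"
      by (intro closed_Collect_le continuous_intros continuous_on_norm diag_cont[OF assms(1)])
  next
    fix F :: "'j set" and x assume F: "finite F"
    have "(norm (T (\<Sum>j\<in>F. x j *\<^sub>C e j)))\<^sup>2 \<le> C * (\<Sum>j\<in>F. (cmod (m j * x j))\<^sup>2)"
      unfolding diag_sum[OF assms(1)] using upper[OF F] .
    also have "\<dots> \<le> C * (\<Sum>j\<in>F. M\<^sup>2 * (cmod (x j))\<^sup>2)"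
      using Cpos M M0
      by (intro mult_left_mono sum_mono) (auto simp: norm_mult power_mult_distrib intro!: mult_right_mono power_mono)
    also have "\<dots> = (C / c) * M\<^sup>2 * (c * (\<Sum>j\<in>F. (cmod (x j))\<^sup>2))"
      using cpos by (simp add: sum_distrib_left field_simps)
    also have "\<dots> \<le> (C / c) * M\<^sup>2 * (norm (\<Sum>j\<in>F. x j *\<^sub>C e j))\<^sup>2"
      using lower[OF F] cpos Cpos by (intro mult_left_mono) auto
    also have "\<dots> = (sqrt (C / c) * M * norm (\<Sum>j\<in>F. x j *\<^sub>C e j))\<^sup>2"
      using cpos Cpos by (simp add: power_mult_distrib)
    finally have "(norm (T (\<Sum>j\<in>F. x j *\<^sub>C e j)))\<^sup>2 \<le> (sqrt (C / c) * M * norm (\<Sum>j\<in>F. x j *\<^sub>C e j))\<^sup>2" .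
    then show "(\<Sum>j\<in>F. x j *\<^sub>C e j) \<in> {y. norm (T y) \<le> sqrt (C / c) * M * norm y}"
      using M0 cpos Cpos by (auto intro: power2_le_imp_le)
  qed
  then show ?thesis by simp
qed

lemma diag_lower:
  assumes "diag T m" and M: "\<And>j. d \<le> cmod (m j)" and d0: "0 \<le> d"
  shows "sqrt (c / C) * d * norm y \<le> norm (T y)"
proof -
  have "y \<in> {y. sqrt (c / C) * d * norm y \<le> norm (T y)}"
  proof (rule closed_all)
    show "closed {y. sqrt (c / C) * d * norm y \<le> norm (T y)}"
      by (intro closed_Collect_le continuous_intros continuous_on_norm diag_cont[OF assms(1)])
  next
    fix F :: "'j set" and x assume F: "finite F"
    have "(sqrt (c / C) * d * norm (\<Sum>j\<in>F. x j *\<^sub>C e j))\<^sup>2 = (c / C) * d\<^sup>2 * (norm (\<Sum>j\<in>F. x j *\<^sub>C e j))\<^sup>2"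
      using cpos Cpos by (simp add: power_mult_distrib)
    also have "\<dots> \<le> (c / C) * d\<^sup>2 * (C * (\<Sum>j\<in>F. (cmod (x j))\<^sup>2))"
      using upper[OF F] cpos Cpos by (intro mult_left_mono) auto
    also have "\<dots> = c * (\<Sum>j\<in>F. d\<^sup>2 * (cmod (x j))\<^sup>2)"
      using Cpos by (simp add: sum_distrib_left field_simps)
    also have "\<dots> \<le> c * (\<Sum>j\<in>F. (cmod (m j * x j))\<^sup>2)"
      using cpos M d0
      by (intro mult_left_mono sum_mono) (auto simp: norm_mult power_mult_distrib intro!: mult_right_mono power_mono)
    also have "\<dots> \<le> (norm (T (\<Sum>j\<in>F. x j *\<^sub>C e j)))\<^sup>2"
      unfolding diag_sum[OF assms(1)] using lower[OF F] .
    finally show "(\<Sum>j\<in>F. x j *\<^sub>C e j) \<in> {y. sqrt (c / C) * d * norm y \<le> norm (T y)}"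
      by (auto intro: power2_le_imp_le)
  qed
  then show ?thesis by simp
qed

lemma diag_add: "diag S m \<Longrightarrow> diag T n \<Longrightarrow> diag (\<lambda>x. S x + T x) (\<lambda>j. m j + n j)"
  by (simp add: diag_def bounded_clinear_add scaleC_add_left)

lemma diag_diff: "diag S m \<Longrightarrow> diag T n \<Longrightarrow> diag (\<lambda>x. S x - T x) (\<lambda>j. m j - n j)"
  by (simp add: diag_def bounded_clinear_diff scaleC_diff_left)

lemma diag_comp: "diag S m \<Longrightarrow> diag T n \<Longrightarrow> diag (\<lambda>x. S (T x)) (\<lambda>j. m j * n j)"
  by (simp add: diag_def bounded_clinear_compose clinear_scaleC scaleC_scaleC mult.commute)

lemma diag_scale: "diag T m \<Longrightarrow> diag (\<lambda>x. a *\<^sub>C T x) (\<lambda>j. a * m j)"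
  by (simp add: diag_def bounded_clinear_scaleC scaleC_scaleC)

lemma diag_id: "diag (\<lambda>x. x) (\<lambda>j. 1)"
  by (simp add: diag_def bounded_clinear_id)

lemma diag_funpow: "diag T m \<Longrightarrow> diag (T ^^ k) (\<lambda>j. m j ^ k)"
proof (induction k)
  case 0 then show ?case using diag_id by (simp add: id_def)
next
  case (Suc k)
  have "diag (\<lambda>x. T ((T ^^ k) x)) (\<lambda>j. m j * m j ^ k)"
    by (rule diag_comp[OF Suc.prems Suc.IH[OF Suc.prems]])
  then show ?case by (simp add: comp_def)
qed

lemma diag_unique:
  assumes "diag S m" "diag T m"
  shows "S = T"
proof
  fix y
  have "diag (\<lambda>x. S x - T x) (\<lambda>j. m j - m j)" by (rule diag_diff[OF assms])
  then have "norm (S y - T y) \<le> sqrt (C / c) * 0 * norm y"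
    by (rule diag_bound) simp
  then show "S y = T y" by simp
qed

lemma diag_inv:
  assumes T: "diag T m" and d: "0 < d" and M: "\<And>j. d \<le> cmod (m j)"
  shows "bij T" "diag (inv T) (\<lambda>j. 1 / m j)"
proof -
  have blT: "bounded_linear T" using T by (simp add: diag_def bounded_clinear_def)
  define k where "k = sqrt (c / C) * d"
  have k0: "0 < k" using cpos Cpos d by (simp add: k_def)
  have low: "\<And>y. k * norm y \<le> norm (T y)" unfolding k_def using diag_lower[OF T M] d by simp
  have m0: "\<And>j. m j \<noteq> 0" using M d by (metis norm_zero not_le)
  have inj: "inj T"
  proof (rule injI)
    fix x y assume "T x = T y"
    then have "T (x - y) = 0" using blT by (simp add: linear_simps)
    then have "k * norm (x - y) \<le> 0" using low[of "x - y"] by simp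
    then show "x = y" using k0 by (simp add: mult_le_0_iff)
  qed
  have "complete (T ` UNIV)"
    by (rule complete_isometric_image[OF k0 subspace_UNIV blT]) (use low complete_UNIV in auto)
  then have cl: "closed (range T)" by (rule complete_imp_closed)
  have sur: "y \<in> range T" for y
  proof (rule closed_all[OF cl])
    fix F :: "'j set" and x assume F: "finite F"
    have "T (\<Sum>j\<in>F. (x j / m j) *\<^sub>C e j) = (\<Sum>j\<in>F. x j *\<^sub>C e j)"
      unfolding diag_sum[OF T] using m0 by simp
    then show "(\<Sum>j\<in>F. x j *\<^sub>C e j) \<in> range T" by (metis rangeI)
  qed
  show bij: "bij T" using inj sur by (auto simp: bij_def surj_def)
  have Tinv: "T (inv T y) = y" for y using bij by (simp add: bij_is_surj surj_f_inv_f)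
  have invT: "inv T (T x) = x" for x using inj by simp
  have lin: "bounded_linear (inv T)"
  proof (rule bounded_linear_intro[where K="1/k"])
    fix x y
    have "T (inv T x + inv T y) = x + y" using blT Tinv by (simp add: linear_simps)
    then show "inv T (x + y) = inv T x + inv T y"
      using invT[of "inv T x + inv T y"] by simp
  next
    fix r x
    have "T (r *\<^sub>R inv T x) = r *\<^sub>R x" using blT Tinv by (simp add: linear_simps)
    then show "inv T (r *\<^sub>R x) = r *\<^sub>R inv T x"
      using invT[of "r *\<^sub>R inv T x"] by simp
  next
    fix x
    have "k * norm (inv T x) \<le> norm x" using low[of "inv T x"] Tinv by simp
    then show "norm (inv T x) \<le> norm x * (1 / k)" using k0 by (simp add: field_simps)
  qed
  have cl: "inv T (a *\<^sub>C x) = a *\<^sub>C inv T x" for a x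
  proof -
    have "T (a *\<^sub>C inv T x) = a *\<^sub>C x" using T Tinv by (simp add: diag_def clinear_scaleC)
    then show ?thesis using invT[of "a *\<^sub>C inv T x"] by simp
  qed
  have ej: "inv T (e j) = (1 / m j) *\<^sub>C e j" for j
  proof -
    have "T ((1 / m j) *\<^sub>C e j) = e j" using T m0[of j]
      by (simp add: diag_def clinear_scaleC scaleC_scaleC)
    then show ?thesis using invT[of "(1 / m j) *\<^sub>C e j"] by simp
  qed
  show "diag (inv T) (\<lambda>j. 1 / m j)"
    using lin cl ej by (simp add: diag_def bounded_clinear_def)
qed

end

lemma riesz_rb: "riesz_basis e \<Longrightarrow> \<exists>c C. rb e c C"
  unfolding riesz_basis_def rb_def by blast


subclass (in chilbert_space) banach ..

lemma funpow_norm_bound: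
  fixes A :: "'a::complex_inner \<Rightarrow> 'a"
  assumes "bounded_clinear A" "\<And>y. norm (A y) \<le> K * norm y" "0 \<le> K"
  shows "norm ((A ^^ n) y) \<le> K ^ n * norm y"
proof (induction n)
  case 0 then show ?case by simp
next
  case (Suc n)
  have "norm ((A ^^ Suc n) y) = norm (A ((A ^^ n) y))" by simp
  also have "\<dots> \<le> K * norm ((A ^^ n) y)" by (rule assms(2))
  also have "\<dots> \<le> K * (K ^ n * norm y)" using Suc assms(3) by (rule mult_left_mono)
  finally show ?case by simp
qed

lemma opnorm_exists:
  assumes "bounded_clinear A"
  obtains K where "K > 0" "\<And>y. norm (A y) \<le> K * norm y"
proof -
  from assms have "bounded_linear A" by (simp add: bounded_clinear_def)
  then obtain K where "K > 0" "\<And>y. norm (A y) \<le> norm y * K"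
    using bounded_linear.pos_bounded by blast
  then show ?thesis using that by (simp add: mult.commute)
qed

lemma exp_op_term_bound:
  fixes A :: "'a::complex_inner \<Rightarrow> 'a"
  assumes "bounded_clinear A" "\<And>y. norm (A y) \<le> K * norm y" "0 \<le> K"
  shows "norm ((t ^ n / fact n) *\<^sub>R (A ^^ n) x) \<le> (\<bar>t\<bar> * K) ^ n /\<^sub>R fact n * norm x"
proof -
  have "norm ((t ^ n / fact n) *\<^sub>R (A ^^ n) x) = \<bar>t\<bar> ^ n / fact n * norm ((A ^^ n) x)"
    by (simp add: power_abs)
  also have "\<dots> \<le> \<bar>t\<bar> ^ n / fact n * (K ^ n * norm x)"
    by (intro mult_left_mono funpow_norm_bound[OF assms]) auto
  also have "\<dots> = (\<bar>t\<bar> * K) ^ n /\<^sub>R fact n * norm x"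
    by (simp add: power_mult_distrib field_simps)
  finally show ?thesis .
qed

lemma exp_op_summable:
  assumes "bounded_clinear (A::'a::chilbert_space \<Rightarrow> 'a)"
  shows "summable (\<lambda>n. (t ^ n / fact n) *\<^sub>R (A ^^ n) x)"
proof -
  obtain K where K: "K > 0" "\<And>y. norm (A y) \<le> K * norm y" using opnorm_exists[OF assms] by blast
  have "summable (\<lambda>n. (\<bar>t\<bar> * K) ^ n /\<^sub>R fact n * norm x)"
    by (intro summable_mult2 summable_exp_generic)
  then show ?thesis
    by (rule summable_comparison_test'[where N=0])
       (rule exp_op_term_bound[OF assms K(2) less_imp_le[OF K(1)]])
qed

lemma exp_op_norm:
  assumes "bounded_clinear (A::'a::chilbert_space \<Rightarrow> 'a)" "\<And>y. norm (A y) \<le> K * norm y" "0 \<le> K"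
  shows "norm (exp_op t A x) \<le> exp (\<bar>t\<bar> * K) * norm x"
proof -
  have s: "summable (\<lambda>n. (\<bar>t\<bar> * K) ^ n /\<^sub>R fact n * norm x)"
    by (intro summable_mult2 summable_exp_generic)
  have "norm (exp_op t A x) \<le> (\<Sum>n. (\<bar>t\<bar> * K) ^ n /\<^sub>R fact n * norm x)"
    unfolding exp_op_def by (rule norm_suminf_le[OF exp_op_term_bound[OF assms] s])
  also have "\<dots> = (\<Sum>n. (\<bar>t\<bar> * K) ^ n /\<^sub>R fact n) * norm x"
    by (rule suminf_mult2[OF summable_exp_generic, symmetric])
  also have "\<dots> = exp (\<bar>t\<bar> * K) * norm x"
    by (simp only: exp_def)
  finally show ?thesis .
qed

lemma exp_op_clinear:
  assumes A: "bounded_clinear (A::'a::chilbert_space \<Rightarrow> 'a)"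
  shows "bounded_clinear (exp_op t A)"
proof -
  have blA: "\<And>n. bounded_clinear (A ^^ n)" by (rule bounded_clinear_funpow[OF A])
  have add: "exp_op t A (x + y) = exp_op t A x + exp_op t A y" for x y
  proof -
    have "exp_op t A (x + y) = (\<Sum>n. (t ^ n / fact n) *\<^sub>R (A ^^ n) x + (t ^ n / fact n) *\<^sub>R (A ^^ n) y)"
      unfolding exp_op_def using blA
      by (simp add: bounded_clinear_def linear_simps scaleR_add_right)
    also have "\<dots> = exp_op t A x + exp_op t A y"
      unfolding exp_op_def by (rule suminf_add[OF exp_op_summable[OF A] exp_op_summable[OF A], symmetric])
    finally show ?thesis .
  qed
  have sc: "exp_op t A (a *\<^sub>C x) = a *\<^sub>C exp_op t A x" for a x
  proof -
    have "exp_op t A (a *\<^sub>C x) = (\<Sum>n. a *\<^sub>C ((t ^ n / fact n) *\<^sub>R (A ^^ n) x))"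
      unfolding exp_op_def using blA
      by (simp add: clinear_scaleC scaleC_real_comm)
    also have "\<dots> = a *\<^sub>C exp_op t A x"
      unfolding exp_op_def
      by (rule bounded_linear.suminf[OF bounded_linear_scaleC_right exp_op_summable[OF A], symmetric])
    finally show ?thesis .
  qed
  obtain K where K: "K > 0" "\<And>y. norm (A y) \<le> K * norm y" using opnorm_exists[OF A] by blast
  have bl: "bounded_linear (exp_op t A)"
  proof (rule bounded_linear_intro[where K="exp (\<bar>t\<bar> * K)"])
    show "exp_op t A (x + y) = exp_op t A x + exp_op t A y" for x y by (rule add)
    show "exp_op t A (r *\<^sub>R x) = r *\<^sub>R exp_op t A x" for r x
      using sc[of "complex_of_real r" x] by (simp add: scaleC_of_real)
    show "norm (exp_op t A x) \<le> norm x * exp (\<bar>t\<bar> * K)" for x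
      using exp_op_norm[OF A K(2)] K(1) by (simp add: mult.commute)
  qed
  show ?thesis using bl sc by (simp add: bounded_clinear_def)
qed

lemma funpow_eigen:
  fixes A :: "'a::complex_inner \<Rightarrow> 'a"
  assumes "bounded_clinear A" "A v = m *\<^sub>C v"
  shows "(A ^^ n) v = (m ^ n) *\<^sub>C v"
proof (induction n)
  case 0 then show ?case by simp
next
  case (Suc n) then show ?case
    using assms by (simp add: clinear_scaleC scaleC_scaleC mult.commute)
qed

lemma exp_op_eigen:
  assumes A: "bounded_clinear (A::'a::chilbert_space \<Rightarrow> 'a)" and v: "A v = m *\<^sub>C v"
  shows "exp_op t A v = exp (complex_of_real t * m) *\<^sub>C v"
proof -
  have "(\<lambda>n. ((complex_of_real t * m) ^ n /\<^sub>R fact n) *\<^sub>C v) sums (exp (complex_of_real t * m) *\<^sub>C v)"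
    by (rule bounded_linear.sums[OF bounded_linear_scaleC_left exp_converges])
  moreover have "((complex_of_real t * m) ^ n /\<^sub>R fact n) *\<^sub>C v = (t ^ n / fact n) *\<^sub>R (A ^^ n) v" for n
  proof -
    have "((complex_of_real t * m) ^ n /\<^sub>R fact n) *\<^sub>C v
        = (complex_of_real (t ^ n / fact n) * m ^ n) *\<^sub>C v"
      by (simp add: power_mult_distrib scaleR_conv_of_real divide_inverse mult_ac)
    also have "\<dots> = (t ^ n / fact n) *\<^sub>R (m ^ n *\<^sub>C v)"
      by (simp only: scaleC_scaleC[symmetric] scaleC_of_real)
    finally show ?thesis using funpow_eigen[OF A v] by simp
  qed
  ultimately show ?thesis unfolding exp_op_def by (simp add: sums_iff)
qed

context rb begin

lemma exp_op_diag: "diag A m \<Longrightarrow> diag (exp_op t A) (\<lambda>j. exp (complex_of_real t * m j))"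
  by (simp add: diag_def exp_op_clinear exp_op_eigen)

end


lemma exp_integral_0_inf:
  fixes w :: complex
  assumes w: "Re w > 0"
  shows "((\<lambda>t::real. exp (- (complex_of_real t * w))) has_integral 1 / w) {0..}"
proof -
  have w0: "w \<noteq> 0" using w by auto
  define F where "F = (\<lambda>z::complex. - exp (- (z * w)) / w)"
  have dF: "(F has_field_derivative exp (- (z * w))) (at z)" for z
    unfolding F_def using w0 by (auto intro!: derivative_eq_intros simp: field_simps)
  have int_k: "((\<lambda>t. exp (- (complex_of_real t * w))) has_integral (F (of_real (real k)) - F (of_real 0))) {0..real k}"
    for k :: nat
    by (rule fundamental_theorem_of_calculus)
       (auto intro!: has_vector_derivative_real_field[OF dF])
  define f where "f = (\<lambda>(k::nat) t. if t \<in> {0..real k} then exp (- (complex_of_real t * w)) else 0)"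
  have fk: "(f k has_integral (F (of_real (real k)) - F 0)) {0..}" for k
    unfolding f_def using int_k[of k] by (subst has_integral_restrict) auto
  have hint: "(\<lambda>t. exp (- Re w * t)) integrable_on {0..}"
    using integrable_on_exp_minus_to_infinity[OF w] by simp
  have bound: "\<forall>t\<in>{0..}. norm (f k t) \<le> exp (- Re w * t)" for k
    by (auto simp: f_def norm_exp_eq_Re)
  have conv: "\<forall>t\<in>{0..}. (\<lambda>k. f k t) \<longlonglongrightarrow> exp (- (complex_of_real t * w))"
  proof
    fix t :: real assume "t \<in> {0..}"
    have t0: "0 \<le> t" using \<open>t \<in> {0..}\<close> by simp
    have "eventually (\<lambda>k. f k t = exp (- (complex_of_real t * w))) sequentially"
    proof (rule eventually_mono[OF eventually_ge_at_top[of "nat \<lceil>t\<rceil>"]])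
      fix k assume "nat \<lceil>t\<rceil> \<le> k"
      then have "real (nat \<lceil>t\<rceil>) \<le> real k" by simp
      then have "t \<le> real k" using real_nat_ceiling_ge[of t] by linarith
      then show "f k t = exp (- (complex_of_real t * w))" using t0 by (simp add: f_def)
    qed
    then show "(\<lambda>k. f k t) \<longlonglongrightarrow> exp (- (complex_of_real t * w))"
      by (rule tendsto_eventually)
  qed
  have lim: "(\<lambda>k. F (of_real (real k)) - F 0) \<longlonglongrightarrow> 1 / w"
  proof -
    have n: "norm (exp (- (complex_of_real (real k) * w))) = exp (- Re w * real k)" for k
      by (simp add: norm_exp_eq_Re)
    have "(\<lambda>k. exp (- Re w * real k)) \<longlonglongrightarrow> 0"
      using w by real_asymp
    then have "(\<lambda>k. exp (- (complex_of_real (real k) * w))) \<longlonglongrightarrow> 0"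
      by (subst tendsto_norm_zero_iff[symmetric]) (simp add: n mult.commute)
    then have "(\<lambda>k. - exp (- (complex_of_real (real k) * w)) / w + 1 / w) \<longlonglongrightarrow> - 0 / w + 1 / w"
      by (intro tendsto_intros) (use w0 in auto)
    then show ?thesis by (simp add: F_def)
  qed
  show ?thesis
    by (rule has_integral_dominated_convergence[OF fk hint bound conv lim])
qed

definition hh :: "complex \<Rightarrow> complex" where "hh z = (1 - z) / (1 + z)"

lemma one_plus_nz: "Re z \<ge> 0 \<Longrightarrow> 1 + z \<noteq> 0"
proof
  assume "Re z \<ge> 0" "1 + z = 0"
  then have "Re (1 + z) = 0" by simp
  with \<open>Re z \<ge> 0\<close> show False by simp
qed

lemma cmod_hh_lt: assumes "Re z > 0" shows "cmod (hh z) < 1"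
proof -
  have "(cmod (1 - z))\<^sup>2 < (cmod (1 + z))\<^sup>2"
    using assms unfolding cmod_power2 by (simp add: power2_eq_square algebra_simps)
  then have "cmod (1 - z) < cmod (1 + z)"
    by (rule power2_less_imp_less) simp
  moreover have "cmod (1 + z) > 0" using one_plus_nz[of z] assms by simp
  ultimately show ?thesis by (simp add: hh_def norm_divide)
qed

lemma cmod_sq_Re: "(cmod z)\<^sup>2 = Re (z * cnj z)"
  using complex_norm_square[of z] by (metis Re_complex_of_real)

lemma sq_sum_expand:
  fixes a :: "'j \<Rightarrow> complex"
  shows "(cmod (\<Sum>j\<in>G. a j))\<^sup>2 = Re (\<Sum>j\<in>G. \<Sum>k\<in>G. a j * cnj (a k))"
  by (simp add: cmod_sq_Re cnj_sum sum_product)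

lemma half_cancel: "(a::complex) * 2 / (2 * b) = a / b"
  by (cases "b = 0") (simp_all add: field_simps)

lemma finite_identity:
  fixes G :: "'j set" and d \<nu> :: "'j \<Rightarrow> complex"
  assumes G: "finite G" and pos: "\<And>j. j \<in> G \<Longrightarrow> Re (\<nu> j) > 0"
  shows "(\<integral>\<^sup>+ t. ennreal ((cmod (\<Sum>j\<in>G. d j * exp (- (complex_of_real t * \<nu> j))))\<^sup>2) * indicator {0..} t \<partial>lborel)
       = (\<integral>\<^sup>+ n. ennreal ((cmod (\<Sum>j\<in>G. d j * (complex_of_real (sqrt 2) * hh (\<nu> j) ^ n / (1 + \<nu> j))))\<^sup>2) \<partial>count_space UNIV)"
proof -
  define V where "V = Re (\<Sum>j\<in>G. \<Sum>k\<in>G. d j * cnj (d k) / (\<nu> j + cnj (\<nu> k)))"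
  have wpos: "Re (\<nu> j + cnj (\<nu> k)) > 0" if "j \<in> G" "k \<in> G" for j k
    using pos[OF that(1)] pos[OF that(2)] by simp
  have pt: "(cmod (\<Sum>j\<in>G. d j * exp (- (complex_of_real t * \<nu> j))))\<^sup>2
      = Re (\<Sum>j\<in>G. \<Sum>k\<in>G. d j * cnj (d k) * exp (- (complex_of_real t * (\<nu> j + cnj (\<nu> k)))))" for t
  proof -
    have "(cmod (\<Sum>j\<in>G. d j * exp (- (complex_of_real t * \<nu> j))))\<^sup>2
       = Re (\<Sum>j\<in>G. \<Sum>k\<in>G. (d j * exp (- (complex_of_real t * \<nu> j))) * cnj (d k * exp (- (complex_of_real t * \<nu> k))))"
      by (rule sq_sum_expand)
    also have "\<dots> = Re (\<Sum>j\<in>G. \<Sum>k\<in>G. d j * cnj (d k) * exp (- (complex_of_real t * (\<nu> j + cnj (\<nu> k)))))"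
    proof (intro arg_cong[where f=Re] sum.cong refl)
      fix j k
      have c: "cnj (exp (- (complex_of_real t * \<nu> k))) = exp (- (complex_of_real t * cnj (\<nu> k)))"
        by (simp add: exp_cnj)
      have e: "exp (- (complex_of_real t * \<nu> j)) * exp (- (complex_of_real t * cnj (\<nu> k)))
          = exp (- (complex_of_real t * (\<nu> j + cnj (\<nu> k))))"
        by (simp add: exp_add[symmetric] distrib_left)
      show "d j * exp (- (complex_of_real t * \<nu> j)) * cnj (d k * exp (- (complex_of_real t * \<nu> k)))
          = d j * cnj (d k) * exp (- (complex_of_real t * (\<nu> j + cnj (\<nu> k))))"
        by (simp only: complex_cnj_mult c e[symmetric] mult_ac)
    qed
    finally show ?thesis .
  qed
  have hi: "((\<lambda>t. \<Sum>j\<in>G. \<Sum>k\<in>G. d j * cnj (d k) * exp (- (complex_of_real t * (\<nu> j + cnj (\<nu> k)))))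
      has_integral (\<Sum>j\<in>G. \<Sum>k\<in>G. d j * cnj (d k) * (1 / (\<nu> j + cnj (\<nu> k))))) {0..}"
    by (intro has_integral_sum G has_integral_mult_right exp_integral_0_inf wpos) auto
  have hiR: "((\<lambda>t. (cmod (\<Sum>j\<in>G. d j * exp (- (complex_of_real t * \<nu> j))))\<^sup>2) has_integral V) {0..}"
    using has_integral_linear[OF hi bounded_linear_Re] unfolding V_def
    by (simp add: pt comp_def)
  have L: "(\<integral>\<^sup>+ t. ennreal ((cmod (\<Sum>j\<in>G. d j * exp (- (complex_of_real t * \<nu> j))))\<^sup>2) * indicator {0..} t \<partial>lborel)
      = ennreal V"
    by (rule nn_integral_has_integral_lebesgue'[OF _ hiR]) simp
  define a where "a j = d j * complex_of_real (sqrt 2) / (1 + \<nu> j)" for j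
  have qlt: "cmod (hh (\<nu> j) * cnj (hh (\<nu> k))) < 1" if "j \<in> G" "k \<in> G" for j k
  proof -
    have "cmod (hh (\<nu> j)) < 1" "cmod (hh (\<nu> k)) < 1" using cmod_hh_lt pos that by auto
    then have "cmod (hh (\<nu> j)) * cmod (cnj (hh (\<nu> k))) < 1 * 1"
      by (intro mult_strict_mono') auto
    then show ?thesis by (simp add: norm_mult)
  qed
  have ptn: "(cmod (\<Sum>j\<in>G. d j * (complex_of_real (sqrt 2) * hh (\<nu> j) ^ n / (1 + \<nu> j))))\<^sup>2
      = Re (\<Sum>j\<in>G. \<Sum>k\<in>G. a j * cnj (a k) * (hh (\<nu> j) * cnj (hh (\<nu> k))) ^ n)" for n
  proof -
    have "(cmod (\<Sum>j\<in>G. d j * (complex_of_real (sqrt 2) * hh (\<nu> j) ^ n / (1 + \<nu> j))))\<^sup>2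
       = Re (\<Sum>j\<in>G. \<Sum>k\<in>G. (d j * (complex_of_real (sqrt 2) * hh (\<nu> j) ^ n / (1 + \<nu> j)))
            * cnj (d k * (complex_of_real (sqrt 2) * hh (\<nu> k) ^ n / (1 + \<nu> k))))"
      by (rule sq_sum_expand)
    also have "\<dots> = Re (\<Sum>j\<in>G. \<Sum>k\<in>G. a j * cnj (a k) * (hh (\<nu> j) * cnj (hh (\<nu> k))) ^ n)"
    proof (intro arg_cong[where f=Re] sum.cong refl)
      fix j k
      show "d j * (complex_of_real (sqrt 2) * hh (\<nu> j) ^ n / (1 + \<nu> j)) *
          cnj (d k * (complex_of_real (sqrt 2) * hh (\<nu> k) ^ n / (1 + \<nu> k)))
          = a j * cnj (a k) * (hh (\<nu> j) * cnj (hh (\<nu> k))) ^ n"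
        unfolding a_def complex_cnj_mult complex_cnj_divide complex_cnj_power power_mult_distrib
        by (simp add: mult_ac)
    qed
    finally show ?thesis .
  qed
  have sm: "(\<lambda>n. \<Sum>j\<in>G. \<Sum>k\<in>G. a j * cnj (a k) * (hh (\<nu> j) * cnj (hh (\<nu> k))) ^ n)
      sums (\<Sum>j\<in>G. \<Sum>k\<in>G. a j * cnj (a k) * (1 / (1 - hh (\<nu> j) * cnj (hh (\<nu> k)))))"
    by (intro sums_sum sums_mult geometric_sums qlt) auto
  have alg: "a j * cnj (a k) * (1 / (1 - hh (\<nu> j) * cnj (hh (\<nu> k)))) = d j * cnj (d k) / (\<nu> j + cnj (\<nu> k))"
    if "j \<in> G" "k \<in> G" for j k
  proof -
    define x where "x = \<nu> j"
    define y where "y = cnj (\<nu> k)"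
    have x1: "1 + x \<noteq> 0" using one_plus_nz[of x] pos[OF that(1)] by (simp add: x_def)
    have y1: "1 + y \<noteq> 0" using one_plus_nz[of y] pos[OF that(2)] by (simp add: y_def)
    have xy: "x + y \<noteq> 0"
    proof
      assume "x + y = 0"
      then have "Re (x + y) = 0" by simp
      with wpos[OF that] show False by (simp only: x_def y_def)
    qed
    have ca: "cnj (a k) = cnj (d k) * complex_of_real (sqrt 2) / (1 + y)"
      by (simp add: a_def y_def)
    have ch: "cnj (hh (\<nu> k)) = (1 - y) / (1 + y)" by (simp add: hh_def y_def)
    have s2: "complex_of_real (sqrt 2) * complex_of_real (sqrt 2) = 2"
      by (simp flip: of_real_mult)
    have p: "(1 + x) * (1 + y) \<noteq> 0" using x1 y1 by simp
    have q: "hh x * ((1 - y) / (1 + y)) * ((1 + x) * (1 + y)) = (1 - x) * (1 - y)"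
      using x1 y1 by (simp add: hh_def)
    have "(1 - hh x * ((1 - y) / (1 + y))) * ((1 + x) * (1 + y)) = 2 * (x + y)"
      by (simp only: left_diff_distrib q) (simp add: algebra_simps)
    then have "1 - hh x * ((1 - y) / (1 + y)) = 2 * (x + y) / ((1 + x) * (1 + y))"
      using p by (simp add: eq_divide_eq)
    then have D: "1 / (1 - hh (\<nu> j) * cnj (hh (\<nu> k))) = (1 + x) * (1 + y) / (2 * (x + y))"
      unfolding ch x_def[symmetric] by simp
    have aj: "a j = d j * complex_of_real (sqrt 2) / (1 + x)" by (simp add: a_def x_def)
    have "d j * complex_of_real (sqrt 2) / (1 + x) * (cnj (d k) * complex_of_real (sqrt 2) / (1 + y))
        * ((1 + x) * (1 + y) / (2 * (x + y)))
        = d j * cnj (d k) * (complex_of_real (sqrt 2) * complex_of_real (sqrt 2)) / (2 * (x + y))"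
      using x1 y1 xy by (simp add: divide_simps)
    also have "\<dots> = d j * cnj (d k) / (x + y)" unfolding s2 by (rule half_cancel)
    finally show ?thesis unfolding D aj ca by (simp add: x_def y_def)
  qed
  have smR: "(\<lambda>n. (cmod (\<Sum>j\<in>G. d j * (complex_of_real (sqrt 2) * hh (\<nu> j) ^ n / (1 + \<nu> j))))\<^sup>2) sums V"
  proof -
    have "(\<Sum>j\<in>G. \<Sum>k\<in>G. a j * cnj (a k) * (1 / (1 - hh (\<nu> j) * cnj (hh (\<nu> k)))))
        = (\<Sum>j\<in>G. \<Sum>k\<in>G. d j * cnj (d k) / (\<nu> j + cnj (\<nu> k)))"
      by (intro sum.cong refl alg)
    note eq = this
    show ?thesis
      unfolding ptn V_def using sums_Re[OF sm] unfolding eq .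
  qed
  have R: "(\<integral>\<^sup>+ n. ennreal ((cmod (\<Sum>j\<in>G. d j * (complex_of_real (sqrt 2) * hh (\<nu> j) ^ n / (1 + \<nu> j))))\<^sup>2) \<partial>count_space UNIV)
      = ennreal V"
    using smR by (simp add: nn_integral_count_space_nat suminf_ennreal2 sums_summable sums_unique[symmetric])
  show ?thesis using L R by simp
qed


lemma cnj_hh: "cnj (hh z) = hh (cnj z)"
  by (simp add: hh_def)

lemma cmod_one_plus_ge: "Re z \<ge> 0 \<Longrightarrow> cmod (1 + z) \<ge> 1"
  using complex_Re_le_cmod[of "1 + z"] by simp

lemma cmod_hh_le: assumes "Re z \<ge> 0" shows "cmod (hh z) \<le> 1"
proof -
  have "(cmod (1 - z))\<^sup>2 \<le> (cmod (1 + z))\<^sup>2"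
    using assms unfolding cmod_power2 by (simp add: power2_eq_square algebra_simps)
  then have "cmod (1 - z) \<le> cmod (1 + z)"
    by (rule power2_le_imp_le) simp
  moreover have "cmod (1 + z) > 0" using one_plus_nz[of z] assms by simp
  ultimately show ?thesis by (simp add: hh_def norm_divide)
qed

context rb begin

lemma diag_cong: "diag T m \<Longrightarrow> (\<And>j. m j = n j) \<Longrightarrow> diag T n"
proof -
  assume "diag T m" "\<And>j. m j = n j"
  then have "m = n" by (rule_tac ext) simp
  with \<open>diag T m\<close> show "diag T n" by simp
qed

lemma e_nz: "e j \<noteq> 0"
proof
  assume "e j = 0"
  have "c * (\<Sum>i\<in>{j}. (cmod ((\<lambda>_. 1::complex) i))\<^sup>2) \<le> (norm (\<Sum>i\<in>{j}. (\<lambda>_. 1::complex) i *\<^sub>C e i))\<^sup>2"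
    by (rule lower) simp
  then show False using \<open>e j = 0\<close> cpos by simp
qed

lemma eig_bound:
  assumes "bounded_clinear T" "\<And>j. T (e j) = m j *\<^sub>C e j"
  obtains K where "K > 0" "\<And>j. cmod (m j) \<le> K"
proof -
  obtain K where K: "K > 0" "\<And>y. norm (T y) \<le> K * norm y" using opnorm_exists[OF assms(1)] by blast
  have "cmod (m j) \<le> K" for j
  proof -
    have "cmod (m j) * norm (e j) \<le> K * norm (e j)" using K(2)[of "e j"] assms(2) by simp
    then show ?thesis using e_nz[of j] by simp
  qed
  then show ?thesis using that K(1) by blast
qed

end

locale rbop = rb e c C for e :: "'j \<Rightarrow> 'h::chilbert_space" and c C +
  fixes A :: "'h \<Rightarrow> 'h" and mu :: "'j \<Rightarrow> complex"
  assumes A_cl: "bounded_clinear A"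
    and A_eig: "\<And>j. A (e j) = (- mu j) *\<^sub>C e j"
    and mu_pos: "\<And>j. Re (mu j) > 0"
begin

definition R where "R = inv (\<lambda>x. x - A x)"
definition B where "B = (\<lambda>x. R x + A (R x))"
definition Q where "Q n y = (B ^^ n) (sqrt 2 *\<^sub>R R y)"
definition S1 where "S1 f y = (\<integral>\<^sup>+ t\<in>{0..}. ennreal ((cmod (cinner f (exp_op t A y)))\<^sup>2) \<partial>lborel)"
definition S2 where "S2 f y = (\<integral>\<^sup>+ n. ennreal ((cmod (cinner f (Q n y)))\<^sup>2) \<partial>count_space UNIV)"

lemma A_diag: "diag A (\<lambda>j. - mu j)"
  using A_cl A_eig by (simp add: diag_def)

lemma IA_diag: "diag (\<lambda>x. x - A x) (\<lambda>j. 1 + mu j)"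
  using diag_diff[OF diag_id A_diag] by simp

lemma IA_low: "1 \<le> cmod (1 + mu j)"
  using cmod_one_plus_ge[of "mu j"] mu_pos[of j] by simp

lemma IA_bij: "bij (\<lambda>x. x - A x)"
  using diag_inv(1)[OF IA_diag _ IA_low] by simp

lemma R_diag: "diag R (\<lambda>j. 1 / (1 + mu j))"
  unfolding R_def using diag_inv(2)[OF IA_diag _ IA_low] by simp

lemma B_diag: "diag B (\<lambda>j. hh (mu j))"
proof -
  have "diag B (\<lambda>j. 1 / (1 + mu j) + (- mu j) * (1 / (1 + mu j)))"
    unfolding B_def by (rule diag_add[OF R_diag diag_comp[OF A_diag R_diag]])
  moreover have "1 / (1 + mu j) + (- mu j) * (1 / (1 + mu j)) = hh (mu j)" for j
    by (simp add: hh_def diff_divide_distrib add_divide_distrib)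
  ultimately show ?thesis by (rule diag_cong)
qed

lemma Q_diag: "diag (Q n) (\<lambda>j. hh (mu j) ^ n * (complex_of_real (sqrt 2) * (1 / (1 + mu j))))"
proof -
  have "diag (\<lambda>y. (B ^^ n) (complex_of_real (sqrt 2) *\<^sub>C R y))
      (\<lambda>j. hh (mu j) ^ n * (complex_of_real (sqrt 2) * (1 / (1 + mu j))))"
    by (rule diag_comp[OF diag_funpow[OF B_diag] diag_scale[OF R_diag]])
  moreover have "(\<lambda>y. (B ^^ n) (complex_of_real (sqrt 2) *\<^sub>C R y)) = Q n"
    by (rule ext) (simp add: Q_def scaleC_of_real)
  ultimately show ?thesis by simp
qed

lemma E_diag: "diag (exp_op t A) (\<lambda>j. exp (complex_of_real t * - mu j))"
  by (rule exp_op_diag[OF A_diag])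

lemma fc_identity:
  assumes "fc y"
  shows "S1 f y = S2 f y"
proof -
  obtain F x where F: "finite F" and y: "y = (\<Sum>j\<in>F. x j *\<^sub>C e j)" using assms unfolding fc_def by blast
  define d where "d j = cnj (x j) * cinner f (e j)" for j
  have h1: "cinner f (exp_op t A y) = (\<Sum>j\<in>F. d j * exp (- (complex_of_real t * cnj (mu j))))" for t
  proof -
    have "cinner f (exp_op t A y) = (\<Sum>j\<in>F. cnj (exp (complex_of_real t * - mu j) * x j) * cinner f (e j))"
      unfolding y diag_sum[OF E_diag] cinner_sum_right cinner_scaleC_right ..
    also have "\<dots> = (\<Sum>j\<in>F. d j * exp (- (complex_of_real t * cnj (mu j))))"
      by (intro sum.cong refl) (simp add: d_def exp_cnj)
    finally show ?thesis .
  qed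
  have h2: "cinner f (Q n y) = (\<Sum>j\<in>F. d j * (complex_of_real (sqrt 2) * hh (cnj (mu j)) ^ n / (1 + cnj (mu j))))" for n
  proof -
    have "cinner f (Q n y) = (\<Sum>j\<in>F. cnj (hh (mu j) ^ n * (complex_of_real (sqrt 2) * (1 / (1 + mu j))) * x j) * cinner f (e j))"
      unfolding y diag_sum[OF Q_diag] cinner_sum_right cinner_scaleC_right ..
    also have "\<dots> = (\<Sum>j\<in>F. d j * (complex_of_real (sqrt 2) * hh (cnj (mu j)) ^ n / (1 + cnj (mu j))))"
      by (intro sum.cong refl) (simp add: d_def cnj_hh[symmetric])
    finally show ?thesis .
  qed
  have pos: "\<And>j. j \<in> F \<Longrightarrow> Re (cnj (mu j)) > 0" using mu_pos by simp
  show ?thesis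
    unfolding S1_def S2_def h1 h2 by (rule finite_identity[OF F pos])
qed

end


lemma ind0_meas: "(indicator {0::real..} :: real \<Rightarrow> ennreal) \<in> borel_measurable borel"
  by (rule borel_measurable_indicator) (rule borel_closed, simp)

lemma meas_ennreal_sq:
  "(g::real\<Rightarrow>complex) \<in> borel_measurable borel \<Longrightarrow>
     (\<lambda>t. ennreal ((cmod (g t))\<^sup>2) * indicator {0..} t) \<in> borel_measurable lborel"
  unfolding measurable_lborel2 by (intro borel_measurable_times_ennreal ind0_meas) measurable

lemma cinner_tendsto:
  assumes "bounded_clinear T" "s \<longlonglongrightarrow> y"
  shows "(\<lambda>n. cinner f (T (s n))) \<longlonglongrightarrow> cinner f (T y)"
proof -
  have "bounded_linear T" using assms(1) by (simp add: bounded_clinear_def)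
  then have "bounded_linear (\<lambda>z. cinner f (T z))"
    by (rule bounded_linear_compose[OF bounded_linear_cinner_right])
  then show ?thesis using assms(2) by (rule bounded_linear.tendsto)
qed

lemma ennreal_sq_tendsto:
  assumes "(X \<longlongrightarrow> (z::complex)) F"
  shows "((\<lambda>n. ennreal ((cmod (X n))\<^sup>2)) \<longlongrightarrow> ennreal ((cmod z)\<^sup>2)) F"
  by (intro tendsto_ennrealI tendsto_intros assms)

lemma aux_lin: "(a::real) * z = a - P \<Longrightarrow> a - b = R \<Longrightarrow> P \<le> R \<Longrightarrow> b \<le> a * z"
  by linarith

context rbop begin

lemma meas_exp: "(\<lambda>t. cinner f (exp_op t A y)) \<in> borel_measurable borel"
proof -
  obtain s where s: "\<And>n. fc (s n)" "s \<longlonglongrightarrow> y" using approx by blast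
  have m: "(\<lambda>t. cinner f (exp_op t A (s n))) \<in> borel_measurable borel" for n
  proof -
    obtain F x where F: "s n = (\<Sum>j\<in>F. x j *\<^sub>C e j)" using s(1)[of n] unfolding fc_def by blast
    have eq: "cinner f (exp_op t A (s n)) = (\<Sum>j\<in>F. cnj (exp (complex_of_real t * - mu j) * x j) * cinner f (e j))" for t
      unfolding F diag_sum[OF E_diag] cinner_sum_right cinner_scaleC_right ..
    show ?thesis unfolding eq
      by (intro borel_measurable_continuous_onI continuous_intros)
  qed
  have "(\<lambda>n. cinner f (exp_op t A (s n))) \<longlonglongrightarrow> cinner f (exp_op t A y)" for t
    by (rule cinner_tendsto[OF exp_op_clinear[OF A_cl] s(2)])
  then show ?thesis by (rule borel_measurable_LIMSEQ_metric[OF m])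
qed

lemma strict:
  assumes d0: "\<delta> > 0" and d: "\<And>j. \<delta> \<le> Re (mu j)"
  shows "S1 f y = S2 f y"
proof -
  obtain K where K0: "K > 0" and K: "\<And>j. cmod (- mu j) \<le> K"
    using eig_bound[OF A_cl A_eig] by blast
  define k0 where "k0 = sqrt (C / c)"
  have k0: "k0 > 0" using cpos Cpos by (simp add: k0_def)
  have Ebound: "norm (exp_op t A z) \<le> k0 * exp (- \<delta> * t) * norm z" if t: "t \<ge> 0" for t z
  proof -
    have "cmod (exp (complex_of_real t * - mu j)) \<le> exp (- \<delta> * t)" for j
      using d[of j] t by (simp add: norm_exp_eq_Re mult_right_mono mult.commute[of t])
    then show ?thesis unfolding k0_def by (rule diag_bound[OF E_diag])
  qed
  define q where "q = 1 - 2 * \<delta> / (1 + K)\<^sup>2"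
  have dK: "\<delta> \<le> K" using d[of undefined] K[of undefined] complex_Re_le_cmod[of "mu undefined"] by simp
  have q0: "0 \<le> q"
  proof -
    have kk: "K * K \<ge> 0" using K0 by simp
    have "(1 + K)\<^sup>2 = 1 + 2 * K + K * K" by (simp add: power2_eq_square algebra_simps)
    then have "2 * \<delta> \<le> (1 + K)\<^sup>2" using dK kk by linarith
    moreover have "(1 + K)\<^sup>2 > 0" using K0 by simp
    ultimately have "2 * \<delta> / (1 + K)\<^sup>2 \<le> 1" by (simp add: divide_le_eq)
    then show ?thesis unfolding q_def by simp
  qed
  have q1: "q < 1" unfolding q_def using d0 K0 by simp
  have hhq: "cmod (hh (mu j)) \<le> q" for j
  proof -
    have mK: "cmod (mu j) \<le> K" using K[of j] by simp
    have r: "(cmod (1 + mu j))\<^sup>2 - (cmod (1 - mu j))\<^sup>2 = 4 * Re (mu j)"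
      unfolding cmod_power2 by (simp add: power2_eq_square algebra_simps)
    have p: "(cmod (1 + mu j))\<^sup>2 \<le> (1 + K)\<^sup>2"
      using norm_triangle_ineq[of 1 "mu j"] mK by (intro power_mono) auto
    have pos: "cmod (1 + mu j) > 0" using one_plus_nz[of "mu j"] mu_pos[of j] by simp
    have "(cmod (1 - mu j))\<^sup>2 \<le> (cmod (1 + mu j))\<^sup>2 * (1 - 4 * \<delta> / (1 + K)\<^sup>2)"
    proof -
      have "4 * \<delta> * (cmod (1 + mu j))\<^sup>2 \<le> 4 * \<delta> * (1 + K)\<^sup>2" using p d0 by simp
      then have "4 * \<delta> * (cmod (1 + mu j))\<^sup>2 / (1 + K)\<^sup>2 \<le> 4 * \<delta>" using K0 by (simp add: divide_le_eq)
      also have "\<dots> \<le> 4 * Re (mu j)" using d[of j] by simp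
      finally have X: "4 * \<delta> * (cmod (1 + mu j))\<^sup>2 / (1 + K)\<^sup>2 \<le> 4 * Re (mu j)" .
      have "(cmod (1 + mu j))\<^sup>2 * (1 - 4 * \<delta> / (1 + K)\<^sup>2)
          = (cmod (1 + mu j))\<^sup>2 - 4 * \<delta> * (cmod (1 + mu j))\<^sup>2 / (1 + K)\<^sup>2"
        by (simp add: right_diff_distrib)
      then show ?thesis using r X by (rule aux_lin)
    qed
    also have "\<dots> \<le> (cmod (1 + mu j))\<^sup>2 * q\<^sup>2"
    proof (rule mult_left_mono)
      have "q\<^sup>2 = 1 - 4 * \<delta> / (1 + K)\<^sup>2 + (2 * \<delta> / (1 + K)\<^sup>2)\<^sup>2"
        unfolding q_def by (simp add: power2_eq_square algebra_simps)
      then show "1 - 4 * \<delta> / (1 + K)\<^sup>2 \<le> q\<^sup>2" by simp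
    qed simp
    finally have "(cmod (1 - mu j))\<^sup>2 \<le> (q * cmod (1 + mu j))\<^sup>2" by (simp add: power_mult_distrib mult.commute)
    then have "cmod (1 - mu j) \<le> q * cmod (1 + mu j)"
      by (rule power2_le_imp_le) (use q0 in simp)
    then show ?thesis using pos by (simp add: hh_def norm_divide divide_le_eq)
  qed
  have Qbound: "norm (Q n z) \<le> k0 * (q ^ n * sqrt 2) * norm z" for n z
  proof -
    have "cmod (hh (mu j) ^ n * (complex_of_real (sqrt 2) * (1 / (1 + mu j)))) \<le> q ^ n * sqrt 2" for j
    proof -
      have "cmod (1 / (1 + mu j)) \<le> 1"
        using IA_low[of j] by (simp add: norm_divide divide_le_eq)
      moreover have "cmod (hh (mu j) ^ n) \<le> q ^ n"
        unfolding norm_power by (intro power_mono hhq) simp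
      ultimately have "cmod (hh (mu j) ^ n) * (sqrt 2 * cmod (1 / (1 + mu j))) \<le> q ^ n * (sqrt 2 * 1)"
        using q0 by (intro mult_mono) auto
      then show ?thesis unfolding norm_mult norm_of_real by simp
    qed
    then show ?thesis unfolding k0_def by (rule diag_bound[OF Q_diag])
  qed
  obtain s where s: "\<And>n. fc (s n)" "s \<longlonglongrightarrow> y" using approx by blast
  obtain Bd where Bd: "Bd > 0" "\<And>n. norm (s n) \<le> Bd"
    using convergent_imp_Bseq[OF convergentI[OF s(2)]] by (auto elim: BseqE)
  have ny: "norm y \<le> Bd"
    using tendsto_norm[OF s(2)] Bd(2) by (intro tendsto_upperbound[of "\<lambda>n. norm (s n)"]) auto
  have L1: "(\<lambda>n. S1 f (s n)) \<longlonglongrightarrow> S1 f y"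
    unfolding S1_def
  proof (rule nn_integral_dominated_convergence[where w="\<lambda>t. ennreal ((norm f * k0 * Bd)\<^sup>2 * exp (- (2 * \<delta>) * t)) * indicator {0..} t"])
    show "(\<lambda>t. ennreal ((cmod (cinner f (exp_op t A (s n))))\<^sup>2) * indicator {0..} t) \<in> borel_measurable lborel" for n
      by (rule meas_ennreal_sq[OF meas_exp])
    show "(\<lambda>t. ennreal ((cmod (cinner f (exp_op t A y)))\<^sup>2) * indicator {0..} t) \<in> borel_measurable lborel"
      by (rule meas_ennreal_sq[OF meas_exp])
    show "(\<lambda>t. ennreal ((norm f * k0 * Bd)\<^sup>2 * exp (- (2 * \<delta>) * t)) * indicator {0..} t) \<in> borel_measurable lborel"
      unfolding measurable_lborel2 by (intro borel_measurable_times_ennreal ind0_meas) measurable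
    show "AE t in lborel. ennreal ((cmod (cinner f (exp_op t A (s n))))\<^sup>2) * indicator {0..} t
        \<le> ennreal ((norm f * k0 * Bd)\<^sup>2 * exp (- (2 * \<delta>) * t)) * indicator {0..} t" for n
    proof (rule AE_I2)
      fix t :: real
      show "ennreal ((cmod (cinner f (exp_op t A (s n))))\<^sup>2) * indicator {0..} t
        \<le> ennreal ((norm f * k0 * Bd)\<^sup>2 * exp (- (2 * \<delta>) * t)) * indicator {0..} t"
      proof (cases "t \<ge> 0")
        case True
        have "cmod (cinner f (exp_op t A (s n))) \<le> norm f * (k0 * exp (- \<delta> * t) * norm (s n))"
          using cmod_cinner_le[of f "exp_op t A (s n)"] Ebound[OF True, of "s n"]
          by (meson mult_left_mono norm_ge_zero order_trans)
        also have "\<dots> \<le> norm f * (k0 * exp (- \<delta> * t) * Bd)"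
          using Bd(2)[of n] k0 by (intro mult_left_mono) auto
        finally have "(cmod (cinner f (exp_op t A (s n))))\<^sup>2 \<le> (norm f * (k0 * exp (- \<delta> * t) * Bd))\<^sup>2"
          by (intro power_mono) auto
        also have "\<dots> = (norm f * k0 * Bd)\<^sup>2 * exp (- (2 * \<delta>) * t)"
          by (simp add: power_mult_distrib power2_eq_square exp_add[symmetric] algebra_simps)
        finally show ?thesis using True by (simp add: ennreal_leI)
      qed simp
    qed
    have hi: "((\<lambda>t. (norm f * k0 * Bd)\<^sup>2 * exp (- (2 * \<delta>) * t)) has_integral (norm f * k0 * Bd)\<^sup>2 * (exp (- (2 * \<delta>) * 0) / (2 * \<delta>))) {0..}"
      by (intro has_integral_mult_right has_integral_exp_minus_to_infinity) (use d0 in simp)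
    have "(\<integral>\<^sup>+ t. ennreal ((norm f * k0 * Bd)\<^sup>2 * exp (- (2 * \<delta>) * t)) * indicator {0..} t \<partial>lborel)
        = ennreal ((norm f * k0 * Bd)\<^sup>2 * (exp (- (2 * \<delta>) * 0) / (2 * \<delta>)))"
      by (rule nn_integral_has_integral_lebesgue'[OF _ hi]) simp
    then show "(\<integral>\<^sup>+ t. ennreal ((norm f * k0 * Bd)\<^sup>2 * exp (- (2 * \<delta>) * t)) * indicator {0..} t \<partial>lborel) < \<infinity>"
      by simp
    show "AE t in lborel. (\<lambda>n. ennreal ((cmod (cinner f (exp_op t A (s n))))\<^sup>2) * indicator {0..} t)
        \<longlonglongrightarrow> ennreal ((cmod (cinner f (exp_op t A y)))\<^sup>2) * indicator {0..} t"
    proof (rule AE_I2)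
      fix t :: real
      have "(\<lambda>n. ennreal ((cmod (cinner f (exp_op t A (s n))))\<^sup>2)) \<longlonglongrightarrow> ennreal ((cmod (cinner f (exp_op t A y)))\<^sup>2)"
        by (intro ennreal_sq_tendsto cinner_tendsto[OF exp_op_clinear[OF A_cl] s(2)])
      then show "(\<lambda>n. ennreal ((cmod (cinner f (exp_op t A (s n))))\<^sup>2) * indicator {0..} t)
        \<longlonglongrightarrow> ennreal ((cmod (cinner f (exp_op t A y)))\<^sup>2) * indicator {0..} t"
        by (cases "t \<ge> 0") auto
    qed
  qed
  have Qcl: "bounded_clinear (Q n)" for n using Q_diag[of n] by (simp add: diag_def)
  have L2: "(\<lambda>N. S2 f (s N)) \<longlonglongrightarrow> S2 f y"
    unfolding S2_def
  proof (rule nn_integral_dominated_convergence[where w="\<lambda>n. ennreal ((norm f * k0 * sqrt 2 * Bd)\<^sup>2 * (q\<^sup>2) ^ n)"])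
    show "AE n in count_space UNIV. ennreal ((cmod (cinner f (Q n (s N))))\<^sup>2)
        \<le> ennreal ((norm f * k0 * sqrt 2 * Bd)\<^sup>2 * (q\<^sup>2) ^ n)" for N
    proof (rule AE_I2)
      fix n
      have "cmod (cinner f (Q n (s N))) \<le> norm f * (k0 * (q ^ n * sqrt 2) * norm (s N))"
        using cmod_cinner_le[of f "Q n (s N)"] Qbound[of n "s N"]
        by (meson mult_left_mono norm_ge_zero order_trans)
      also have "\<dots> \<le> norm f * (k0 * (q ^ n * sqrt 2) * Bd)"
        using Bd(2)[of N] k0 q0 by (intro mult_left_mono) auto
      finally have "(cmod (cinner f (Q n (s N))))\<^sup>2 \<le> (norm f * (k0 * (q ^ n * sqrt 2) * Bd))\<^sup>2"
        by (intro power_mono) auto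
      also have "\<dots> = (norm f * k0 * sqrt 2 * Bd)\<^sup>2 * (q\<^sup>2) ^ n"
      proof -
        have qq: "(q ^ n)\<^sup>2 = (q\<^sup>2) ^ n"
          by (metis power_mult mult.commute)
        show ?thesis by (simp add: power_mult_distrib qq)
      qed
      finally show "ennreal ((cmod (cinner f (Q n (s N))))\<^sup>2) \<le> ennreal ((norm f * k0 * sqrt 2 * Bd)\<^sup>2 * (q\<^sup>2) ^ n)"
        by (rule ennreal_leI)
    qed
    have q2: "norm (q\<^sup>2) < 1" using q0 q1 by (simp add: power_less_one_iff abs_square_less_1)
    have sm: "summable (\<lambda>n. (norm f * k0 * sqrt 2 * Bd)\<^sup>2 * (q\<^sup>2) ^ n)"
      by (intro summable_mult summable_geometric q2)
    have "(\<integral>\<^sup>+ n. ennreal ((norm f * k0 * sqrt 2 * Bd)\<^sup>2 * (q\<^sup>2) ^ n) \<partial>count_space UNIV)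
        = ennreal (\<Sum>n. (norm f * k0 * sqrt 2 * Bd)\<^sup>2 * (q\<^sup>2) ^ n)"
      using sm by (simp add: nn_integral_count_space_nat suminf_ennreal2)
    then show "(\<integral>\<^sup>+ n. ennreal ((norm f * k0 * sqrt 2 * Bd)\<^sup>2 * (q\<^sup>2) ^ n) \<partial>count_space UNIV) < \<infinity>"
      by simp
    show "AE n in count_space UNIV. (\<lambda>N. ennreal ((cmod (cinner f (Q n (s N))))\<^sup>2))
        \<longlonglongrightarrow> ennreal ((cmod (cinner f (Q n y)))\<^sup>2)"
      by (rule AE_I2) (intro ennreal_sq_tendsto cinner_tendsto[OF Qcl s(2)])
  qed simp_all
  have "S1 f (s N) = S2 f (s N)" for N by (rule fc_identity[OF s(1)])
  then have "(\<lambda>N. S1 f (s N)) \<longlonglongrightarrow> S2 f y" using L2 by simp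
  then show ?thesis using L1 by (rule LIMSEQ_unique[rotated])
qed

end


lemma hh_diff: "1 + a \<noteq> 0 \<Longrightarrow> 1 + b \<noteq> 0 \<Longrightarrow> hh a - hh b = 2 * (b - a) / ((1 + a) * (1 + b))"
  by (simp add: hh_def divide_simps) (simp add: algebra_simps)

lemma one_plus_hh: "1 + z \<noteq> 0 \<Longrightarrow> 1 + hh z = 2 / (1 + z)"
  by (simp add: hh_def divide_simps)

lemma hh_invol: "1 + z \<noteq> 0 \<Longrightarrow> hh (hh z) = z"
proof -
  assume z: "1 + z \<noteq> 0"
  have "hh (hh z) = (1 - hh z) / (1 + hh z)" by (simp add: hh_def)
  also have "1 - hh z = 2 * z / (1 + z)" using z by (simp add: hh_def divide_simps)
  also have "1 + hh z = 2 / (1 + z)" using z by (rule one_plus_hh)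
  finally show ?thesis using z by (simp add: divide_simps)
qed

lemma inv_diff: "1 + (a::complex) \<noteq> 0 \<Longrightarrow> 1 + b \<noteq> 0 \<Longrightarrow> 1 / (1 + a) - 1 / (1 + b) = (b - a) / ((1 + a) * (1 + b))"
  by (simp add: divide_simps)

lemma Qmult_diff:
  assumes a: "Re a \<ge> 0" and b: "Re b \<ge> 0"
  shows "cmod (hh a ^ n * (1 / (1 + a)) - hh b ^ n * (1 / (1 + b))) \<le> (2 * real n + 1) * cmod (a - b)"
proof -
  have a1: "1 + a \<noteq> 0" and b1: "1 + b \<noteq> 0" using one_plus_nz a b by auto
  have la: "cmod (1 + a) \<ge> 1" and lb: "cmod (1 + b) \<ge> 1" using cmod_one_plus_ge a b by auto
  have ha: "cmod (hh a) \<le> 1" and hb: "cmod (hh b) \<le> 1" using cmod_hh_le a b by auto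
  have prod: "cmod ((1 + a) * (1 + b)) \<ge> 1"
    using mult_mono[OF la lb] by (simp add: norm_mult)
  have dx: "cmod (hh a - hh b) \<le> 2 * cmod (a - b)"
  proof -
    have "cmod (hh a - hh b) = 2 * cmod (b - a) / cmod ((1 + a) * (1 + b))"
      by (simp only: hh_diff[OF a1 b1] norm_divide norm_mult) simp
    also have "\<dots> \<le> 2 * cmod (b - a)" using prod by (simp add: divide_le_eq mult_le_cancel_left1)
    finally show ?thesis by (simp add: norm_minus_commute)
  qed
  have du: "cmod (1 / (1 + a) - 1 / (1 + b)) \<le> cmod (a - b)"
  proof -
    have "cmod (1 / (1 + a) - 1 / (1 + b)) = cmod (b - a) / cmod ((1 + a) * (1 + b))"
      by (simp add: inv_diff[OF a1 b1] norm_divide)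
    also have "\<dots> \<le> cmod (b - a)" using prod by (simp add: divide_le_eq mult_le_cancel_left1)
    finally show ?thesis by (simp add: norm_minus_commute)
  qed
  have dn: "cmod (hh a ^ n - hh b ^ n) \<le> 2 * n * cmod (a - b)"
  proof -
    have "cmod (hh a ^ n - hh b ^ n) \<le> n * cmod (hh a - hh b)" by (rule norm_power_diff[OF ha hb])
    also have "\<dots> \<le> n * (2 * cmod (a - b))" using dx by (intro mult_left_mono) auto
    finally show ?thesis by simp
  qed
  have ua: "cmod (1 / (1 + a)) \<le> 1" using la by (simp add: norm_divide divide_le_eq)
  have yb: "cmod (hh b ^ n) \<le> 1" using hb by (simp add: norm_power power_le_one)
  have "hh a ^ n * (1 / (1 + a)) - hh b ^ n * (1 / (1 + b))
      = (hh a ^ n - hh b ^ n) * (1 / (1 + a)) + hh b ^ n * (1 / (1 + a) - 1 / (1 + b))"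
    by (simp add: algebra_simps)
  then have "cmod (hh a ^ n * (1 / (1 + a)) - hh b ^ n * (1 / (1 + b)))
      \<le> cmod (hh a ^ n - hh b ^ n) * cmod (1 / (1 + a)) + cmod (hh b ^ n) * cmod (1 / (1 + a) - 1 / (1 + b))"
    by (metis norm_mult norm_triangle_ineq)
  also have "\<dots> \<le> (2 * n * cmod (a - b)) * 1 + 1 * cmod (a - b)"
    by (intro add_mono mult_mono dn ua yb du) auto
  finally show ?thesis by (simp add: algebra_simps)
qed

lemma exp_lip:
  assumes a: "Re a \<ge> 0" and b: "Re b \<ge> 0" and t: "t \<ge> 0"
  shows "cmod (exp (complex_of_real t * - a) - exp (complex_of_real t * - b)) \<le> t * cmod (a - b)"
proof -
  have "norm ((\<lambda>z. exp (complex_of_real t * - z)) a - (\<lambda>z. exp (complex_of_real t * - z)) b) \<le> t * norm (a - b)"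
  proof (rule field_differentiable_bound[where S="{z. Re z \<ge> 0}"])
    show "convex {z. Re z \<ge> 0}" by (rule convex_halfspace_Re_ge)
    show "((\<lambda>z. exp (complex_of_real t * - z)) has_field_derivative
        (- complex_of_real t * exp (complex_of_real t * - z))) (at z within {z. Re z \<ge> 0})" for z
      by (auto intro!: derivative_eq_intros)
    show "norm (- complex_of_real t * exp (complex_of_real t * - z)) \<le> t" if "z \<in> {z. Re z \<ge> 0}" for z
      using that t by (simp add: norm_mult norm_exp_eq_Re mult_left_le)
  qed (use a b in auto)
  then show ?thesis by simp
qed

lemma Re_hh_lower:
  assumes w: "cmod w \<le> r" and r: "r < 1"
  shows "Re (hh w) \<ge> (1 - r\<^sup>2) / 4"
proof -
  have w1: "1 + w \<noteq> 0"
  proof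
    assume "1 + w = 0" then have "w = -1" by (simp add: add_eq_0_iff)
    then show False using w r by simp
  qed
  have e: "Re (hh w) = (1 - (cmod w)\<^sup>2) / (cmod (1 + w))\<^sup>2"
    unfolding hh_def Re_divide cmod_power2 by (simp add: power2_eq_square algebra_simps)
  have n1: "0 \<le> 1 - (cmod w)\<^sup>2" "1 - r\<^sup>2 \<le> 1 - (cmod w)\<^sup>2"
    using w r by (auto intro!: power_mono simp: power_le_one abs_le_iff)
  have n2: "0 < (cmod (1 + w))\<^sup>2" "(cmod (1 + w))\<^sup>2 \<le> 4"
  proof -
    show "0 < (cmod (1 + w))\<^sup>2" using w1 by simp
    have "cmod (1 + w) \<le> 2" using norm_triangle_ineq[of 1 w] w r by simp
    then show "(cmod (1 + w))\<^sup>2 \<le> 4" using power_mono[of "cmod (1 + w)" 2 2] by simp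
  qed
  have "(1 - r\<^sup>2) / 4 \<le> (1 - (cmod w)\<^sup>2) / 4" using n1 by simp
  also have "\<dots> \<le> (1 - (cmod w)\<^sup>2) / (cmod (1 + w))\<^sup>2"
    using n1 n2 by (intro divide_left_mono) auto
  finally show ?thesis using e by simp
qed

context rbop begin

lemma k0_pos: "sqrt (C / c) > 0" using cpos Cpos by simp

lemma cinner_zero_tendsto:
  assumes "\<And>k. norm (D k) \<le> b k" "b \<longlonglongrightarrow> 0"
  shows "(\<lambda>k. cinner f (D k)) \<longlonglongrightarrow> 0"
proof (rule Lim_null_comparison[where g="\<lambda>k. norm f * b k"])
  show "\<forall>\<^sub>F k in sequentially. norm (cinner f (D k)) \<le> norm f * b k"
    using cmod_cinner_le[of f] assms(1) by (intro always_eventually allI) (meson mult_left_mono norm_ge_zero order_trans)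
  show "(\<lambda>k. norm f * b k) \<longlonglongrightarrow> 0" using tendsto_mult_right_zero[OF assms(2)] by simp
qed

lemma eps_part: "S2 f y \<le> S1 f y"
proof -
  define ep where "ep k = inverse (real (Suc k))" for k
  define Ak where "Ak k = (\<lambda>x. A x - ep k *\<^sub>R x)" for k
  define muk where "muk k j = mu j + complex_of_real (ep k)" for k j
  have ep0: "ep k > 0" for k by (simp add: ep_def)
  have eplim: "ep \<longlonglongrightarrow> 0" unfolding ep_def by (rule LIMSEQ_inverse_real_of_nat)
  have Akcl: "bounded_clinear (Ak k)" for k
  proof -
    have "bounded_clinear (\<lambda>x. A x - complex_of_real (ep k) *\<^sub>C x)"
      by (intro bounded_clinear_diff A_cl bounded_clinear_scaleC bounded_clinear_id)
    then show ?thesis by (simp add: Ak_def scaleC_of_real)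
  qed
  have Akeig: "Ak k (e j) = (- muk k j) *\<^sub>C e j" for k j
    by (simp add: Ak_def muk_def A_eig scaleC_of_real[symmetric] scaleC_diff_left[symmetric])
  have mukpos: "Re (muk k j) > 0" for k j using mu_pos[of j] ep0[of k] by (simp add: muk_def)
  have rbk: "rbop e c C (Ak k) (muk k)" for k
    by (intro rbop.intro rb_axioms rbop_axioms.intro Akcl Akeig mukpos)
  have eqk: "rbop.S1 (Ak k) f y = rbop.S2 (Ak k) f y" for k
    by (rule rbop.strict[OF rbk ep0[of k]]) (simp add: muk_def mu_pos less_imp_le)
  have le1: "rbop.S1 (Ak k) f y \<le> S1 f y" for k
  proof -
    have opeq: "exp_op t (Ak k) = (\<lambda>x. exp (complex_of_real t * - complex_of_real (ep k)) *\<^sub>C exp_op t A x)" for t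
    proof (rule diag_unique[OF rbop.E_diag[OF rbk]])
      show "diag (\<lambda>x. exp (complex_of_real t * - complex_of_real (ep k)) *\<^sub>C exp_op t A x) (\<lambda>j. exp (complex_of_real t * - muk k j))"
        by (rule diag_cong[OF diag_scale[OF E_diag]]) (simp add: muk_def exp_add[symmetric] algebra_simps)
    qed
    show ?thesis
      unfolding rbop.S1_def[OF rbk] S1_def
    proof (rule nn_integral_mono)
      fix t :: real
      show "ennreal ((cmod (cinner f (exp_op t (Ak k) y)))\<^sup>2) * indicator {0..} t
          \<le> ennreal ((cmod (cinner f (exp_op t A y)))\<^sup>2) * indicator {0..} t"
      proof (cases "t \<ge> 0")
        case True
        have "cmod (cinner f (exp_op t (Ak k) y)) = exp (- (t * ep k)) * cmod (cinner f (exp_op t A y))"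
          unfolding opeq by (simp add: cinner_scaleC_right norm_mult norm_exp_eq_Re)
        also have "\<dots> \<le> cmod (cinner f (exp_op t A y))"
          using True ep0[of k] by (intro mult_left_le_one_le) auto
        finally have "(cmod (cinner f (exp_op t (Ak k) y)))\<^sup>2 \<le> (cmod (cinner f (exp_op t A y)))\<^sup>2"
          by (intro power_mono) auto
        then show ?thesis by (intro mult_right_mono ennreal_leI) auto
      qed simp
    qed
  qed
  have conv: "(\<lambda>k. cinner f (rbop.Q (Ak k) n y)) \<longlonglongrightarrow> cinner f (Q n y)" for n
  proof -
    define D where "D k z = rbop.Q (Ak k) n z - Q n z" for k z
    have Dd: "diag (D k) (\<lambda>j. hh (muk k j) ^ n * (complex_of_real (sqrt 2) * (1 / (1 + muk k j)))
        - hh (mu j) ^ n * (complex_of_real (sqrt 2) * (1 / (1 + mu j))))" for k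
      unfolding D_def by (rule diag_diff[OF rbop.Q_diag[OF rbk] Q_diag])
    have mb: "cmod (hh (muk k j) ^ n * (complex_of_real (sqrt 2) * (1 / (1 + muk k j)))
        - hh (mu j) ^ n * (complex_of_real (sqrt 2) * (1 / (1 + mu j)))) \<le> sqrt 2 * ((2 * real n + 1) * ep k)" for k j
    proof -
      have "hh (muk k j) ^ n * (complex_of_real (sqrt 2) * (1 / (1 + muk k j)))
        - hh (mu j) ^ n * (complex_of_real (sqrt 2) * (1 / (1 + mu j)))
        = complex_of_real (sqrt 2) * (hh (muk k j) ^ n * (1 / (1 + muk k j)) - hh (mu j) ^ n * (1 / (1 + mu j)))"
        by (simp add: algebra_simps)
      moreover have "cmod (hh (muk k j) ^ n * (1 / (1 + muk k j)) - hh (mu j) ^ n * (1 / (1 + mu j)))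
          \<le> (2 * real n + 1) * cmod (muk k j - mu j)"
        by (rule Qmult_diff) (use mukpos[of k j] mu_pos[of j] in auto)
      moreover have "cmod (muk k j - mu j) = ep k" using ep0[of k] by (simp add: muk_def)
      ultimately show ?thesis by (simp add: norm_mult)
    qed
    have nb: "norm (D k y) \<le> sqrt (C / c) * (sqrt 2 * ((2 * real n + 1) * ep k)) * norm y" for k
      by (rule diag_bound[OF Dd mb])
    have "(\<lambda>k. sqrt (C / c) * (sqrt 2 * ((2 * real n + 1) * ep k)) * norm y) \<longlonglongrightarrow> sqrt (C / c) * (sqrt 2 * ((2 * real n + 1) * 0)) * norm y"
      by (intro tendsto_intros eplim)
    then have "(\<lambda>k. cinner f (D k y)) \<longlonglongrightarrow> 0"
      by (intro cinner_zero_tendsto[OF nb]) simp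
    then have "(\<lambda>k. cinner f (D k y) + cinner f (Q n y)) \<longlonglongrightarrow> 0 + cinner f (Q n y)"
      by (intro tendsto_intros)
    then show ?thesis by (simp add: D_def cinner_diff_right)
  qed
  have "S2 f y = (\<integral>\<^sup>+ n. liminf (\<lambda>k. ennreal ((cmod (cinner f (rbop.Q (Ak k) n y)))\<^sup>2)) \<partial>count_space UNIV)"
    unfolding S2_def
    by (intro nn_integral_cong lim_imp_Liminf[symmetric] ennreal_sq_tendsto conv) simp
  also have "\<dots> \<le> liminf (\<lambda>k. \<integral>\<^sup>+ n. ennreal ((cmod (cinner f (rbop.Q (Ak k) n y)))\<^sup>2) \<partial>count_space UNIV)"
    by (rule nn_integral_liminf) simp
  also have "\<dots> = liminf (\<lambda>k. rbop.S1 (Ak k) f y)"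
    by (simp add: eqk rbop.S2_def[OF rbk])
  also have "\<dots> \<le> limsup (\<lambda>k. rbop.S1 (Ak k) f y)" by (rule Liminf_le_Limsup) simp
  also have "\<dots> \<le> S1 f y" by (rule Limsup_bounded) (simp add: le1)
  finally show ?thesis .
qed

end


lemma div_le_self_real: "1 \<le> (a::real) \<Longrightarrow> 0 \<le> x \<Longrightarrow> x / a \<le> x"
  using divide_left_mono[of 1 a x] by simp

lemma Wbound:
  fixes m :: complex and K rr t :: real
  assumes m: "Re m > 0" "cmod m \<le> K" and rr: "0 < rr" "rr * (1 + K) \<le> 1"
      and t: "t \<ge> 0"
  shows "cmod (exp (complex_of_real t * - hh (complex_of_real (1 - rr) * hh m))
            * ((1 + hh (complex_of_real (1 - rr) * hh m)) * (1 / (1 + m)))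
          - exp (complex_of_real t * - m)) \<le> rr * (1 + K)\<^sup>2 * (2 * t * (1 + K) + 1)"
    and "Re (hh (complex_of_real (1 - rr) * hh m)) > 0"
proof -
  define w0 where "w0 = hh m"
  define r where "r = 1 - rr"
  define m' where "m' = hh (complex_of_real r * w0)"
  have K0: "K \<ge> 0" using m(2) norm_ge_zero order_trans by blast
  have rr1: "rr \<le> 1"
  proof -
    have "rr * 1 \<le> rr * (1 + K)" using rr K0 by (intro mult_left_mono) auto
    then show ?thesis using rr(2) by linarith
  qed
  have r0: "0 \<le> r" "r < 1" using rr rr1 by (auto simp: r_def)
  have m1: "1 + m \<noteq> 0" using one_plus_nz[of m] m by simp
  have hw: "cmod w0 < 1" unfolding w0_def by (rule cmod_hh_lt[OF m(1)])
  have mw: "m = hh w0" unfolding w0_def using hh_invol[OF m1] by simp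
  have n1m: "cmod (1 + m) \<le> 1 + K" using norm_triangle_ineq[of 1 m] m(2) by simp
  have n1m0: "cmod (1 + m) > 0" using m1 by simp
  have a1: "cmod (1 + w0) \<ge> 2 / (1 + K)"
  proof -
    have "cmod (1 + w0) = 2 / cmod (1 + m)" unfolding w0_def one_plus_hh[OF m1] by (simp add: norm_divide)
    also have "2 / cmod (1 + m) \<ge> 2 / (1 + K)" using n1m n1m0 K0 by (intro divide_left_mono) (auto intro: mult_pos_pos)
    finally show ?thesis by simp
  qed
  have dw: "cmod (w0 - complex_of_real r * w0) \<le> rr"
  proof -
    have "w0 - complex_of_real r * w0 = complex_of_real rr * w0" by (simp add: r_def algebra_simps)
    then have "cmod (w0 - complex_of_real r * w0) = rr * cmod w0" using rr by (simp add: norm_mult)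
    also have "\<dots> \<le> rr * 1" using hw rr by (intro mult_left_mono) auto
    finally show ?thesis by simp
  qed
  have a2: "cmod (1 + complex_of_real r * w0) \<ge> 1 / (1 + K)"
  proof -
    have "cmod (1 + w0) \<le> cmod (1 + complex_of_real r * w0) + cmod (w0 - complex_of_real r * w0)"
      using norm_triangle_ineq[of "1 + complex_of_real r * w0" "w0 - complex_of_real r * w0"] by simp
    moreover have "rr \<le> 1 / (1 + K)" using rr K0 by (simp add: field_simps)
    moreover have "2 / (1 + K) = 1 / (1 + K) + 1 / (1 + K)" by simp
    ultimately show ?thesis using a1 dw by linarith
  qed
  have pK: "1 / (1 + K) > 0" using K0 by simp
  have rw1: "1 + complex_of_real r * w0 \<noteq> 0" using a2 pK by auto
  have w1: "1 + w0 \<noteq> 0" using a1 K0 by auto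
  have dm: "cmod (m' - m) \<le> rr * (1 + K)\<^sup>2"
  proof -
    have "m' - m = 2 * (w0 - complex_of_real r * w0) / ((1 + complex_of_real r * w0) * (1 + w0))"
      unfolding m'_def mw by (rule hh_diff[OF rw1 w1])
    then have "cmod (m' - m) = 2 * cmod (w0 - complex_of_real r * w0) / (cmod (1 + complex_of_real r * w0) * cmod (1 + w0))"
      by (simp only: norm_divide norm_mult) simp
    also have "\<dots> \<le> 2 * rr / (1 / (1 + K) * (2 / (1 + K)))"
      by (intro frac_le mult_left_mono mult_mono dw a1 a2 mult_pos_pos) (use pK K0 rr in auto)
    also have "\<dots> = rr * (1 + K)\<^sup>2" using K0 by (simp add: field_simps power2_eq_square)
    finally show ?thesis .
  qed
  have rew0: "cmod (complex_of_real r * w0) \<le> r" using hw r0 by (simp add: norm_mult mult_left_le)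
  have Rm': "Re m' \<ge> (1 - r\<^sup>2) / 4" unfolding m'_def by (rule Re_hh_lower[OF rew0 r0(2)])
  have Rm'0: "Re m' > 0"
  proof -
    have "r\<^sup>2 < 1" using r0 by (simp add: power_less_one_iff abs_square_less_1)
    then have "(1 - r\<^sup>2) / 4 > 0" by simp
    then show ?thesis using Rm' by linarith
  qed
  then show "Re (hh (complex_of_real (1 - rr) * hh m)) > 0" by (simp add: m'_def w0_def r_def)
  have m'b: "cmod (1 + m') \<le> 2 * (1 + K)"
  proof -
    have "cmod (1 + m') \<le> cmod (1 + m) + cmod (m' - m)"
      using norm_triangle_ineq[of "1 + m" "m' - m"] by simp
    also have "\<dots> \<le> (1 + K) + rr * (1 + K)\<^sup>2" using n1m dm by simp
    also have "rr * (1 + K)\<^sup>2 = (rr * (1 + K)) * (1 + K)" by (simp add: power2_eq_square)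
    also have "\<dots> \<le> 1 * (1 + K)" using rr K0 by (intro mult_right_mono) auto
    finally show ?thesis by simp
  qed
  have e1: "cmod (exp (complex_of_real t * - m)) \<le> 1"
    using m(1) t by (simp add: norm_exp_eq_Re)
  have N: "cmod (exp (complex_of_real t * - m') * (1 + m') - exp (complex_of_real t * - m) * (1 + m))
      \<le> rr * (1 + K)\<^sup>2 * (2 * t * (1 + K) + 1)"
  proof -
    have "exp (complex_of_real t * - m') * (1 + m') - exp (complex_of_real t * - m) * (1 + m)
        = (exp (complex_of_real t * - m') - exp (complex_of_real t * - m)) * (1 + m')
          + exp (complex_of_real t * - m) * (m' - m)"
      by (simp add: algebra_simps)
    then have "cmod (exp (complex_of_real t * - m') * (1 + m') - exp (complex_of_real t * - m) * (1 + m))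
        \<le> cmod (exp (complex_of_real t * - m') - exp (complex_of_real t * - m)) * cmod (1 + m')
          + cmod (exp (complex_of_real t * - m)) * cmod (m' - m)"
      by (metis norm_mult norm_triangle_ineq)
    also have "\<dots> \<le> (t * cmod (m' - m)) * (2 * (1 + K)) + 1 * cmod (m' - m)"
      by (intro add_mono mult_mono exp_lip m'b e1) (use Rm'0 m(1) t in auto)
    also have "\<dots> = cmod (m' - m) * (2 * t * (1 + K) + 1)" by (simp add: algebra_simps)
    also have "\<dots> \<le> rr * (1 + K)\<^sup>2 * (2 * t * (1 + K) + 1)"
      using dm t K0 by (intro mult_right_mono) auto
    finally show ?thesis .
  qed
  have "exp (complex_of_real t * - m') * ((1 + m') * (1 / (1 + m))) - exp (complex_of_real t * - m)
      = (exp (complex_of_real t * - m') * (1 + m') - exp (complex_of_real t * - m) * (1 + m)) / (1 + m)"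
    using m1 by (simp add: field_simps)
  then have "cmod (exp (complex_of_real t * - m') * ((1 + m') * (1 / (1 + m))) - exp (complex_of_real t * - m))
      = cmod (exp (complex_of_real t * - m') * (1 + m') - exp (complex_of_real t * - m) * (1 + m)) / cmod (1 + m)"
    by (simp add: norm_divide)
  also have "\<dots> \<le> cmod (exp (complex_of_real t * - m') * (1 + m') - exp (complex_of_real t * - m) * (1 + m))"
    using cmod_one_plus_ge[of m] m(1) by (intro div_le_self_real) auto
  finally show "cmod (exp (complex_of_real t * - hh (complex_of_real (1 - rr) * hh m))
            * ((1 + hh (complex_of_real (1 - rr) * hh m)) * (1 / (1 + m)))
          - exp (complex_of_real t * - m)) \<le> rr * (1 + K)\<^sup>2 * (2 * t * (1 + K) + 1)"
    using N by (simp add: m'_def w0_def r_def)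
qed

context rbop begin

lemma r_part: "S1 f y \<le> S2 f y"
proof -
  obtain K where K0: "K > 0" and K: "\<And>j. cmod (- mu j) \<le> K" using eig_bound[OF A_cl A_eig] by blast
  have Km: "cmod (mu j) \<le> K" for j using K[of j] by simp
  define rr where "rr k = inverse (real (Suc (Suc k)))" for k
  define r where "r k = 1 - rr k" for k
  have rr0: "0 < rr k" for k by (simp add: rr_def)
  have rr1: "rr k < 1" for k
  proof -
    have "1 < real (Suc (Suc k))" by simp
    then show ?thesis unfolding rr_def by (rule inverse_less_1_iff[THEN iffD2, OF disjI2])
  qed
  have rrlim: "rr \<longlonglongrightarrow> 0"
    unfolding rr_def by (rule LIMSEQ_Suc[OF LIMSEQ_inverse_real_of_nat])
  have r01: "0 \<le> r k" "r k < 1" for k using rr0[of k] rr1[of k] by (auto simp: r_def)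
  have hle: "cmod (hh (mu j)) \<le> 1" for j using cmod_hh_le mu_pos[of j] by (simp add: less_imp_le)
  have rw: "cmod (complex_of_real (r k) * hh (mu j)) \<le> r k" for k j
    using hle[of j] r01[of k] by (simp add: norm_mult mult_left_le)
  define Dk where "Dk k = (\<lambda>x. x + r k *\<^sub>R B x)" for k
  have Dkd: "diag (Dk k) (\<lambda>j. 1 + complex_of_real (r k) * hh (mu j))" for k
  proof -
    have "diag (\<lambda>x. x + complex_of_real (r k) *\<^sub>C B x) (\<lambda>j. 1 + complex_of_real (r k) * hh (mu j))"
      by (rule diag_add[OF diag_id diag_scale[OF B_diag]])
    then show ?thesis by (simp add: Dk_def scaleC_of_real)
  qed
  have Dklow: "rr k \<le> cmod (1 + complex_of_real (r k) * hh (mu j))" for k j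
  proof -
    have "1 \<le> cmod (1 + complex_of_real (r k) * hh (mu j)) + cmod (complex_of_real (r k) * hh (mu j))"
      using norm_triangle_ineq4[of "1 + complex_of_real (r k) * hh (mu j)" "complex_of_real (r k) * hh (mu j)"]
      by simp
    then show ?thesis using rw[of k j] by (simp add: r_def)
  qed
  have Dnz: "1 + complex_of_real (r k) * hh (mu j) \<noteq> 0" for k j
    using Dklow[of k j] rr0[of k] by auto
  have Dinv: "diag (inv (Dk k)) (\<lambda>j. 1 / (1 + complex_of_real (r k) * hh (mu j)))" for k
    by (rule diag_inv(2)[OF Dkd rr0 Dklow])
  define Ak where "Ak k = (\<lambda>x. inv (Dk k) (r k *\<^sub>R B x - x))" for k
  define muk where "muk k j = hh (complex_of_real (r k) * hh (mu j))" for k j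
  have Akd: "diag (Ak k) (\<lambda>j. - muk k j)" for k
  proof -
    have "diag (\<lambda>x. inv (Dk k) (complex_of_real (r k) *\<^sub>C B x - x))
        (\<lambda>j. 1 / (1 + complex_of_real (r k) * hh (mu j)) * (complex_of_real (r k) * hh (mu j) - 1))"
      by (rule diag_comp[OF Dinv diag_diff[OF diag_scale[OF B_diag] diag_id]])
    moreover have "1 / (1 + complex_of_real (r k) * hh (mu j)) * (complex_of_real (r k) * hh (mu j) - 1) = - muk k j" for j
      using Dnz[of k j] unfolding muk_def hh_def by (simp add: divide_simps)
    ultimately have "diag (\<lambda>x. inv (Dk k) (complex_of_real (r k) *\<^sub>C B x - x)) (\<lambda>j. - muk k j)"
      by (rule diag_cong)
    then show ?thesis by (simp add: Ak_def scaleC_of_real)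
  qed
  define dk where "dk k = (1 - (r k)\<^sup>2) / 4" for k
  have dk0: "dk k > 0" for k
  proof -
    have "(r k)\<^sup>2 < 1" using r01[of k] by (simp add: power_less_one_iff abs_square_less_1)
    then show ?thesis by (simp add: dk_def)
  qed
  have mukRe: "dk k \<le> Re (muk k j)" for k j
    unfolding dk_def muk_def by (rule Re_hh_lower[OF rw r01(2)])
  have mukpos: "Re (muk k j) > 0" for k j using dk0[of k] mukRe[of k j] by linarith
  have rbk: "rbop e c C (Ak k) (muk k)" for k
    using Akd[of k] mukpos
    by (intro rbop.intro rb_axioms rbop_axioms.intro) (auto simp: diag_def)
  define yk where "yk k = R y - Ak k (R y)" for k
  have eqk: "rbop.S1 (Ak k) f (yk k) = rbop.S2 (Ak k) f (yk k)" for k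
    by (rule rbop.strict[OF rbk dk0[of k] mukRe])
  have Rd: "diag (\<lambda>z. R z - Ak k (R z)) (\<lambda>j. (1 + muk k j) * (1 / (1 + mu j)))" for k
    by (rule diag_comp[OF rbop.IA_diag[OF rbk] R_diag])
  have muk1: "1 + muk k j \<noteq> 0" for k j using one_plus_nz[of "muk k j"] mukpos[of k j] by simp
  have le2: "rbop.S2 (Ak k) f (yk k) \<le> S2 f y" for k
  proof -
    have opeq: "(\<lambda>z. rbop.Q (Ak k) n (R z - Ak k (R z))) = (\<lambda>z. complex_of_real (r k ^ n) *\<^sub>C Q n z)" for n
    proof (rule diag_unique)
      show "diag (\<lambda>z. complex_of_real (r k ^ n) *\<^sub>C Q n z)
          (\<lambda>j. complex_of_real (r k ^ n) * (hh (mu j) ^ n * (complex_of_real (sqrt 2) * (1 / (1 + mu j)))))"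
        by (rule diag_scale[OF Q_diag])
      have "diag (\<lambda>z. rbop.Q (Ak k) n (R z - Ak k (R z)))
          (\<lambda>j. hh (muk k j) ^ n * (complex_of_real (sqrt 2) * (1 / (1 + muk k j))) * ((1 + muk k j) * (1 / (1 + mu j))))"
        by (rule diag_comp[OF rbop.Q_diag[OF rbk] Rd])
      moreover have "hh (muk k j) ^ n * (complex_of_real (sqrt 2) * (1 / (1 + muk k j))) * ((1 + muk k j) * (1 / (1 + mu j)))
          = complex_of_real (r k ^ n) * (hh (mu j) ^ n * (complex_of_real (sqrt 2) * (1 / (1 + mu j))))" for j
      proof -
        have "hh (muk k j) = complex_of_real (r k) * hh (mu j)"
          unfolding muk_def by (rule hh_invol[OF Dnz])
        then show ?thesis using muk1[of k j] by (simp add: power_mult_distrib)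
      qed
      ultimately show "diag (\<lambda>z. rbop.Q (Ak k) n (R z - Ak k (R z)))
          (\<lambda>j. complex_of_real (r k ^ n) * (hh (mu j) ^ n * (complex_of_real (sqrt 2) * (1 / (1 + mu j)))))"
        by (rule diag_cong)
    qed
    show ?thesis
      unfolding rbop.S2_def[OF rbk] S2_def
    proof (rule nn_integral_mono)
      fix n
      have "cinner f (rbop.Q (Ak k) n (yk k)) = cinner f (complex_of_real (r k ^ n) *\<^sub>C Q n y)"
        using fun_cong[OF opeq[of n], of y] by (simp add: yk_def)
      then have "cmod (cinner f (rbop.Q (Ak k) n (yk k))) = r k ^ n * cmod (cinner f (Q n y))"
        using r01[of k] by (simp add: cinner_scaleC_right norm_mult norm_power)
      also have "\<dots> \<le> cmod (cinner f (Q n y))"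
        using r01[of k] by (intro mult_left_le_one_le power_le_one) auto
      finally have "(cmod (cinner f (rbop.Q (Ak k) n (yk k))))\<^sup>2 \<le> (cmod (cinner f (Q n y)))\<^sup>2"
        by (intro power_mono) auto
      then show "ennreal ((cmod (cinner f (rbop.Q (Ak k) n (yk k))))\<^sup>2) \<le> ennreal ((cmod (cinner f (Q n y)))\<^sup>2)"
        by (rule ennreal_leI)
    qed
  qed
  have ev: "eventually (\<lambda>k. rr k * (1 + K) \<le> 1) sequentially"
  proof -
    have "eventually (\<lambda>k. rr k < 1 / (1 + K)) sequentially"
      using order_tendstoD(2)[OF rrlim, of "1 / (1 + K)"] K0 by simp
    then show ?thesis
      by (rule eventually_mono) (use K0 in \<open>simp add: field_simps\<close>)
  qed
  have conv: "(\<lambda>k. cinner f (exp_op t (Ak k) (yk k))) \<longlonglongrightarrow> cinner f (exp_op t A y)" if t: "t \<ge> 0" for t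
  proof -
    define Z where "Z k z = exp_op t (Ak k) (R z - Ak k (R z)) - exp_op t A z" for k z
    have Zd: "diag (Z k) (\<lambda>j. exp (complex_of_real t * - muk k j) * ((1 + muk k j) * (1 / (1 + mu j)))
        - exp (complex_of_real t * - mu j))" for k
      unfolding Z_def by (rule diag_diff[OF diag_comp[OF rbop.E_diag[OF rbk] Rd] E_diag])
    define b where "b k = rr k * (1 + K)\<^sup>2 * (2 * t * (1 + K) + 1)" for k
    have blim: "b \<longlonglongrightarrow> 0"
    proof -
      have "(\<lambda>k. rr k * (1 + K)\<^sup>2 * (2 * t * (1 + K) + 1)) \<longlonglongrightarrow> 0 * (1 + K)\<^sup>2 * (2 * t * (1 + K) + 1)"
        by (intro tendsto_intros rrlim)
      moreover have "b = (\<lambda>k. rr k * (1 + K)\<^sup>2 * (2 * t * (1 + K) + 1))" by (rule ext) (simp add: b_def)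
      ultimately show ?thesis by simp
    qed
    have evb: "eventually (\<lambda>k. norm (cinner f (Z k y)) \<le> norm f * (sqrt (C / c) * b k * norm y)) sequentially"
    proof (rule eventually_mono[OF ev])
      fix k assume rk: "rr k * (1 + K) \<le> 1"
      have "cmod (exp (complex_of_real t * - muk k j) * ((1 + muk k j) * (1 / (1 + mu j)))
          - exp (complex_of_real t * - mu j)) \<le> b k" for j
        unfolding muk_def r_def b_def by (rule Wbound(1)[OF mu_pos Km rr0 rk t])
      then have "norm (Z k y) \<le> sqrt (C / c) * b k * norm y" by (rule diag_bound[OF Zd])
      then show "norm (cinner f (Z k y)) \<le> norm f * (sqrt (C / c) * b k * norm y)"
        using cmod_cinner_le[of f "Z k y"] by (meson mult_left_mono norm_ge_zero order_trans)
    qed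
    have "(\<lambda>k. norm f * (sqrt (C / c) * b k * norm y)) \<longlonglongrightarrow> norm f * (sqrt (C / c) * 0 * norm y)"
      by (intro tendsto_intros blim)
    then have "(\<lambda>k. cinner f (Z k y)) \<longlonglongrightarrow> 0"
      by (intro Lim_null_comparison[OF evb]) simp
    then have "(\<lambda>k. cinner f (Z k y) + cinner f (exp_op t A y)) \<longlonglongrightarrow> 0 + cinner f (exp_op t A y)"
      by (intro tendsto_intros)
    then show ?thesis by (simp add: Z_def yk_def cinner_diff_right)
  qed
  have "S1 f y = (\<integral>\<^sup>+ t. liminf (\<lambda>k. ennreal ((cmod (cinner f (exp_op t (Ak k) (yk k))))\<^sup>2) * indicator {0..} t) \<partial>lborel)"
    unfolding S1_def
  proof (intro nn_integral_cong lim_imp_Liminf[symmetric])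
    fix t :: real
    show "(\<lambda>k. ennreal ((cmod (cinner f (exp_op t (Ak k) (yk k))))\<^sup>2) * indicator {0..} t)
        \<longlonglongrightarrow> ennreal ((cmod (cinner f (exp_op t A y)))\<^sup>2) * indicator {0..} t"
    proof (cases "t \<ge> 0")
      case True
      have "(\<lambda>k. ennreal ((cmod (cinner f (exp_op t (Ak k) (yk k))))\<^sup>2))
          \<longlonglongrightarrow> ennreal ((cmod (cinner f (exp_op t A y)))\<^sup>2)"
        by (rule ennreal_sq_tendsto[OF conv[OF True]])
      then show ?thesis using True by simp
    qed simp
  qed simp
  also have "\<dots> \<le> liminf (\<lambda>k. \<integral>\<^sup>+ t. ennreal ((cmod (cinner f (exp_op t (Ak k) (yk k))))\<^sup>2) * indicator {0..} t \<partial>lborel)"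
    by (rule nn_integral_liminf) (rule meas_ennreal_sq[OF rbop.meas_exp[OF rbk]])
  also have "\<dots> = liminf (\<lambda>k. rbop.S2 (Ak k) f (yk k))"
    by (simp add: eqk[symmetric] rbop.S1_def[OF rbk])
  also have "\<dots> \<le> limsup (\<lambda>k. rbop.S2 (Ak k) f (yk k))" by (rule Liminf_le_Limsup) simp
  also have "\<dots> \<le> S2 f y" by (rule Limsup_bounded) (simp add: le2)
  finally show ?thesis .
qed

lemma S_eq: "S1 f y = S2 f y"
  using eps_part r_part by (rule antisym[rotated])

end


lemma count_space_prod_nn:
  "(\<integral>\<^sup>+ i. (\<integral>\<^sup>+ n. G (i, n) \<partial>count_space UNIV) \<partial>count_space I)
   = (\<integral>\<^sup>+ k. G k \<partial>count_space (I \<times> (UNIV :: 'b set)))"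
proof -
  have "(\<integral>\<^sup>+ i. (\<integral>\<^sup>+ n. G (i, n) \<partial>count_space UNIV) \<partial>count_space I)
      = (\<integral>\<^sup>+ i. (\<integral>\<^sup>+ n. G (i, n) \<partial>count_space UNIV) * indicator I i \<partial>count_space UNIV)"
    by (rule nn_integral_count_space_indicator) simp
  also have "\<dots> = (\<integral>\<^sup>+ i. (\<integral>\<^sup>+ (n::'b). G (i, n) * indicator (I \<times> UNIV) (i, n) \<partial>count_space UNIV) \<partial>count_space UNIV)"
    by (intro nn_integral_cong) (simp add: nn_integral_multc[symmetric] indicator_def)
  also have "\<dots> = (\<integral>\<^sup>+ k. G k * indicator (I \<times> UNIV) k \<partial>count_space UNIV)"
    by (rule nn_integral_fst_count_space)
  also have "\<dots> = (\<integral>\<^sup>+ k. G k \<partial>count_space (I \<times> (UNIV :: 'b set)))"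
    by (rule nn_integral_count_space_indicator[symmetric]) simp
  finally show ?thesis .
qed

theorem mainTheorem10:
  fixes A :: "'h::{chilbert_space, second_countable_topology} \<Rightarrow> 'h"
    and e :: "'j \<Rightarrow> 'h" and lam :: "'j \<Rightarrow> complex"
    and I :: "'i set" and g :: "'i \<Rightarrow> 'h"
  assumes "bounded_clinear A"
    and "riesz_basis e"
    and "\<And>j. A (e j) = (- lam j) *\<^sub>C e j"
    and "\<And>j. Re (lam j) > 0"
    and "countable I"
  shows "semi_continuous_frame A g I {0..} \<longleftrightarrow>
    (let R = inv (\<lambda>x. x - A x);
         a = (\<lambda>i. sqrt 2 *\<^sub>R R (g i));
         B = (\<lambda>x. R x + A (R x))
     in is_frame (\<lambda>(i, n). (B ^^ n) (a i)) (I \<times> (UNIV :: nat set)))"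
proof -
  obtain c C where rb: "rb e c C" using riesz_rb[OF assms(2)] by blast
  interpret rbop e c C A lam
    by (intro rbop.intro rb rbop_axioms.intro assms)
  have key: "(\<integral>\<^sup>+ i. (\<integral>\<^sup>+ t\<in>{0..}. ennreal ((cmod (cinner f (exp_op t A (g i))))\<^sup>2) \<partial>lborel) \<partial>count_space I)
      = (\<integral>\<^sup>+ k. ennreal ((cmod (cinner f ((\<lambda>(i, n). (B ^^ n) (sqrt 2 *\<^sub>R R (g i))) k)))\<^sup>2)
           \<partial>count_space (I \<times> (UNIV :: nat set)))" for f
  proof -
    have "(\<integral>\<^sup>+ i. (\<integral>\<^sup>+ t\<in>{0..}. ennreal ((cmod (cinner f (exp_op t A (g i))))\<^sup>2) \<partial>lborel) \<partial>count_space I)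
        = (\<integral>\<^sup>+ i. (\<integral>\<^sup>+ n. ennreal ((cmod (cinner f ((\<lambda>(i, n). (B ^^ n) (sqrt 2 *\<^sub>R R (g i))) (i, n))))\<^sup>2)
            \<partial>count_space UNIV) \<partial>count_space I)"
      by (intro nn_integral_cong) (use S_eq in \<open>simp add: S1_def S2_def Q_def\<close>)
    also have "\<dots> = (\<integral>\<^sup>+ k. ennreal ((cmod (cinner f ((\<lambda>(i, n). (B ^^ n) (sqrt 2 *\<^sub>R R (g i))) k)))\<^sup>2)
           \<partial>count_space (I \<times> (UNIV :: nat set)))"
      by (rule count_space_prod_nn)
    finally show ?thesis .
  qed
  have cnt: "countable (I \<times> (UNIV :: nat set))" using assms(5) by simp
  show ?thesis
    unfolding Let_def semi_continuous_frame_def is_frame_def R_def[symmetric] B_def[symmetric] key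
    using cnt by simp
qed


end
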